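(* Let $n\geq 2$ and let $\theta$ be a domestic duality of the building $\mathsf{A}_n(2)$ (the projective space $\mathsf{PG}(n,2)$). Then either $\theta$ is an exceptional domestic duality, or $n$ is odd and $\theta$ is a symplectic polarity.
   Context: Vertices of type $i$ of $\mathsf{PG}(n,2)$ are the $(i-1)$-dimensional projective subspaces. A duality is an automorphism with type map $i\mapsto n+1-i$. Simplices are opposite if every chamber containing either is opposite some chamber containing the other. $\theta$ is domestic if no chamber is mapped to an opposite chamber; it is exceptional domestic if it is domestic and for every type $i$ there is a simplex whose type contains $i$ mapped to an opposite simplex. A symplectic polarity is a duality $U\mapsto U^\perp$ for a nondegenerate alternating form on $\mathbb{F}_2^{n+1}$. *)

theory Defs
  imports Main "HOL-Library.Z2"
begin

text \<open>The vector space F_2^(n+1), realised as functions nat => bit supported on {0..n}.\<close>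

definition Vec :: "nat \<Rightarrow> (nat \<Rightarrow> bit) set" where
  "Vec n = {v. \<forall>i>n. v i = 0}"

definition vadd :: "(nat \<Rightarrow> bit) \<Rightarrow> (nat \<Rightarrow> bit) \<Rightarrow> (nat \<Rightarrow> bit)" where
  "vadd x y = (\<lambda>i. x i + y i)"

definition vzero :: "nat \<Rightarrow> bit" where
  "vzero = (\<lambda>i. 0)"

text \<open>Linear subspaces of F_2^(n+1) (over F_2, scalar closure is automatic).\<close>
definition subspace2 :: "nat \<Rightarrow> (nat \<Rightarrow> bit) set \<Rightarrow> bool" where
  "subspace2 n U \<longleftrightarrow> U \<subseteq> Vec n \<and> vzero \<in> U \<and> (\<forall>x\<in>U. \<forall>y\<in>U. vadd x y \<in> U)"

text \<open>Vector-space dimension: a subspace of dimension d has exactly 2^d elements.\<close>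
definition vdim :: "(nat \<Rightarrow> bit) set \<Rightarrow> nat" where
  "vdim U = (THE d. card U = 2 ^ d)"

text \<open>Vertices of PG(n,2): proper nontrivial subspaces; a vertex U has type vdim U
  (U is a projective subspace of projective dimension vdim U - 1), types 1..n.\<close>
definition Verts :: "nat \<Rightarrow> (nat \<Rightarrow> bit) set set" where
  "Verts n = {U. subspace2 n U \<and> 1 \<le> vdim U \<and> vdim U \<le> n}"

definition incident :: "(nat \<Rightarrow> bit) set \<Rightarrow> (nat \<Rightarrow> bit) set \<Rightarrow> bool" where
  "incident U W \<longleftrightarrow> U \<subseteq> W \<or> W \<subseteq> U"

definition simplex :: "nat \<Rightarrow> (nat \<Rightarrow> bit) set set \<Rightarrow> bool" where
  "simplex n S \<longleftrightarrow> S \<subseteq> Verts n \<and> (\<forall>U\<in>S. \<forall>W\<in>S. incident U W)"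

definition stype :: "(nat \<Rightarrow> bit) set set \<Rightarrow> nat set" where
  "stype S = vdim ` S"

text \<open>Chambers: maximal simplices (complete flags), i.e. simplices of type {1..n}.\<close>
definition chamber :: "nat \<Rightarrow> (nat \<Rightarrow> bit) set set \<Rightarrow> bool" where
  "chamber n C \<longleftrightarrow> simplex n C \<and> stype C = {1..n}"

definition opp_chamber :: "nat \<Rightarrow> (nat \<Rightarrow> bit) set set \<Rightarrow> (nat \<Rightarrow> bit) set set \<Rightarrow> bool" where
  "opp_chamber n C D \<longleftrightarrow> chamber n C \<and> chamber n D \<and>
     (\<forall>U\<in>C. \<forall>W\<in>D. vdim U + vdim W = n + 1 \<longrightarrow> U \<inter> W = {vzero})"

definition opp_simplex :: "nat \<Rightarrow> (nat \<Rightarrow> bit) set set \<Rightarrow> (nat \<Rightarrow> bit) set set \<Rightarrow> bool" where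
  "opp_simplex n S T \<longleftrightarrow> simplex n S \<and> simplex n T \<and>
     (\<forall>C. chamber n C \<and> S \<subseteq> C \<longrightarrow> (\<exists>D. chamber n D \<and> T \<subseteq> D \<and> opp_chamber n C D)) \<and>
     (\<forall>D. chamber n D \<and> T \<subseteq> D \<longrightarrow> (\<exists>C. chamber n C \<and> S \<subseteq> C \<and> opp_chamber n C D))"

definition duality :: "nat \<Rightarrow> ((nat \<Rightarrow> bit) set \<Rightarrow> (nat \<Rightarrow> bit) set) \<Rightarrow> bool" where
  "duality n \<theta> \<longleftrightarrow> bij_betw \<theta> (Verts n) (Verts n) \<and>
     (\<forall>U\<in>Verts n. \<forall>W\<in>Verts n. incident U W \<longleftrightarrow> incident (\<theta> U) (\<theta> W)) \<and>
     (\<forall>U\<in>Verts n. vdim (\<theta> U) = n + 1 - vdim U)"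

definition domestic :: "nat \<Rightarrow> ((nat \<Rightarrow> bit) set \<Rightarrow> (nat \<Rightarrow> bit) set) \<Rightarrow> bool" where
  "domestic n \<theta> \<longleftrightarrow> \<not> (\<exists>C. chamber n C \<and> opp_chamber n C (\<theta> ` C))"

definition exceptional_domestic :: "nat \<Rightarrow> ((nat \<Rightarrow> bit) set \<Rightarrow> (nat \<Rightarrow> bit) set) \<Rightarrow> bool" where
  "exceptional_domestic n \<theta> \<longleftrightarrow> domestic n \<theta> \<and>
     (\<forall>i\<in>{1..n}. \<exists>S. simplex n S \<and> i \<in> stype S \<and> opp_simplex n S (\<theta> ` S))"

definition alt_form :: "nat \<Rightarrow> ((nat \<Rightarrow> bit) \<Rightarrow> (nat \<Rightarrow> bit) \<Rightarrow> bit) \<Rightarrow> bool" where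
  "alt_form n f \<longleftrightarrow>
     (\<forall>x\<in>Vec n. \<forall>y\<in>Vec n. \<forall>z\<in>Vec n. f (vadd x y) z = f x z + f y z \<and> f z (vadd x y) = f z x + f z y) \<and>
     (\<forall>x\<in>Vec n. f x x = 0) \<and>
     (\<forall>x\<in>Vec n. (\<forall>y\<in>Vec n. f x y = 0) \<longrightarrow> x = vzero)"

definition perp :: "nat \<Rightarrow> ((nat \<Rightarrow> bit) \<Rightarrow> (nat \<Rightarrow> bit) \<Rightarrow> bit) \<Rightarrow> (nat \<Rightarrow> bit) set \<Rightarrow> (nat \<Rightarrow> bit) set" where
  "perp n f U = {x\<in>Vec n. \<forall>u\<in>U. f u x = 0}"

definition symplectic_polarity :: "nat \<Rightarrow> ((nat \<Rightarrow> bit) set \<Rightarrow> (nat \<Rightarrow> bit) set) \<Rightarrow> bool" where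
  "symplectic_polarity n \<theta> \<longleftrightarrow> (\<exists>f. alt_form n f \<and> (\<forall>U\<in>Verts n. \<theta> U = perp n f U))"

end

theory Submission
  imports Defs
begin


declare add_bit_eq_xor[simp del] mult_bit_eq_and[simp del]

lemma bit_cases: "(a::bit) = 0 \<or> a = 1" by (cases a) simp_all
lemma bit_double[simp]: "(a::bit) + a = 0"
  by (metis bit_2_eq_0 mult_2 mult_zero_left)
lemma bit_one_one[simp]: "(1::bit) + 1 = 0" by simp
lemma bit_add_eq0: "(a::bit) + b = 0 \<longleftrightarrow> a = b"
  using bit_cases[of a] bit_cases[of b] by auto
lemma bit_add_cancel_left[simp]: "(a::bit) + (a + b) = b"
  by (metis add.assoc add_0 bit_double)

lemma vadd_comm: "vadd x y = vadd y x" by (simp add: vadd_def add.commute)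
lemma vadd_assoc: "vadd (vadd x y) z = vadd x (vadd y z)" by (simp add: vadd_def add.assoc)
lemma vadd_self[simp]: "vadd x x = vzero" by (simp add: vadd_def vzero_def)
lemma vadd_zero[simp]: "vadd x vzero = x" "vadd vzero x = x" by (simp_all add: vadd_def vzero_def)
lemma vadd_cancel[simp]: "vadd x (vadd x y) = y" "vadd (vadd y x) x = y"
  by (simp_all add: vadd_def add.assoc[symmetric])
lemma vadd_cancel2[simp]: "vadd x (vadd y x) = y" "vadd (vadd x y) x = y"
  by (metis vadd_cancel vadd_comm)+
lemma vadd_eq_zero_iff: "vadd x y = vzero \<longleftrightarrow> x = y"
  by (metis vadd_cancel(1) vadd_self vadd_zero(1))
lemma vadd_inj: "vadd a x = vadd a y \<longleftrightarrow> x = y"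
  by (metis vadd_cancel(1))
lemma vadd_eq_iff: "vadd a x = y \<longleftrightarrow> x = vadd a y"
  by (metis vadd_cancel(1))

lemma Vec_zero[simp]: "vzero \<in> Vec n" by (simp add: Vec_def vzero_def)
lemma Vec_add[simp]: "x \<in> Vec n \<Longrightarrow> y \<in> Vec n \<Longrightarrow> vadd x y \<in> Vec n"
  by (simp add: Vec_def vadd_def)

definition ev :: "nat \<Rightarrow> nat \<Rightarrow> bit" where "ev i = (\<lambda>j. if j = i then 1 else 0)"

lemma Vec_Suc: "Vec (Suc n) = Vec n \<union> vadd (ev (Suc n)) ` Vec n"
proof
  show "Vec (Suc n) \<subseteq> Vec n \<union> vadd (ev (Suc n)) ` Vec n"
  proof
    fix v assume v: "v \<in> Vec (Suc n)"
    then have vz: "\<And>i. i > Suc n \<Longrightarrow> v i = 0" by (simp add: Vec_def)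
    show "v \<in> Vec n \<union> vadd (ev (Suc n)) ` Vec n"
    proof (cases "v (Suc n) = 0")
      case True
      have "v i = 0" if "i > n" for i
      proof (cases "i = Suc n")
        case True then show ?thesis using \<open>v (Suc n) = 0\<close> by simp
      next
        case False then show ?thesis using that vz by simp
      qed
      then have "v \<in> Vec n" unfolding Vec_def by blast
      then show ?thesis by simp
    next
      case False
      then have v1: "v (Suc n) = 1" by simp
      have "vadd (ev (Suc n)) v i = 0" if "i > n" for i
      proof (cases "i = Suc n")
        case True then show ?thesis using v1 by (simp add: vadd_def ev_def)
      next
        case False then show ?thesis using that vz by (simp add: vadd_def ev_def)
      qed
      then have "vadd (ev (Suc n)) v \<in> Vec n" unfolding Vec_def by blast
      moreover have "v = vadd (ev (Suc n)) (vadd (ev (Suc n)) v)" by simp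
      ultimately show ?thesis by blast
    qed
  qed
  show "Vec n \<union> vadd (ev (Suc n)) ` Vec n \<subseteq> Vec (Suc n)"
  proof
    fix v assume "v \<in> Vec n \<union> vadd (ev (Suc n)) ` Vec n"
    then show "v \<in> Vec (Suc n)"
    proof
      assume "v \<in> Vec n" then show ?thesis by (simp add: Vec_def)
    next
      assume "v \<in> vadd (ev (Suc n)) ` Vec n"
      then obtain w where w: "w \<in> Vec n" "v = vadd (ev (Suc n)) w" by blast
      then show ?thesis by (simp add: Vec_def vadd_def ev_def)
    qed
  qed
qed

lemma Vec_0: "Vec 0 = {vzero, ev 0}"
proof -
  have "v = vzero \<or> v = ev 0" if "v \<in> Vec 0" for v
  proof -
    have z: "\<And>i. i > 0 \<Longrightarrow> v i = 0" using that by (simp add: Vec_def)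
    show ?thesis
    proof (cases "v 0 = 0")
      case True then have "v = vzero" using z unfolding vzero_def by (metis neq0_conv)
      then show ?thesis by simp
    next
      case False then have "v = ev 0" using z unfolding ev_def by (auto simp: fun_eq_iff)
      then show ?thesis by simp
    qed
  qed
  moreover have "ev 0 \<in> Vec 0" by (simp add: Vec_def ev_def)
  ultimately show ?thesis by auto
qed

lemma Vec_card: "finite (Vec n) \<and> card (Vec n) = 2 ^ Suc n"
proof (induction n)
  case 0
  have "vzero \<noteq> ev 0" by (simp add: vzero_def ev_def fun_eq_iff)
  then show ?case by (simp add: Vec_0)
next
  case (Suc n)
  let ?A = "Vec n" and ?B = "vadd (ev (Suc n)) ` Vec n"
  have d: "?A \<inter> ?B = {}"
  proof (rule ccontr)
    assume "?A \<inter> ?B \<noteq> {}"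
    then obtain w where "w \<in> Vec n" "vadd (ev (Suc n)) w \<in> Vec n" by blast
    then have "w (Suc n) = 0" "ev (Suc n) (Suc n) + w (Suc n) = 0" by (simp_all add: Vec_def vadd_def)
    then show False by (simp add: ev_def)
  qed
  have cB: "card ?B = card ?A" by (rule card_image) (simp add: inj_on_def vadd_inj)
  show ?case using Suc d cB by (simp add: Vec_Suc card_Un_disjoint)
qed

lemma Vec_finite[simp]: "finite (Vec n)" using Vec_card by blast
lemma Vec_card'[simp]: "card (Vec n) = 2 ^ Suc n" using Vec_card by blast



lemma sub_Vec: "subspace2 n U \<Longrightarrow> U \<subseteq> Vec n" by (simp add: subspace2_def)
lemma sub_zero: "subspace2 n U \<Longrightarrow> vzero \<in> U" by (simp add: subspace2_def)
lemma sub_add: "subspace2 n U \<Longrightarrow> x \<in> U \<Longrightarrow> y \<in> U \<Longrightarrow> vadd x y \<in> U"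
  by (simp add: subspace2_def)
lemma sub_finite: "subspace2 n U \<Longrightarrow> finite U"
  using sub_Vec Vec_finite finite_subset by blast
lemma sub_Vec_full: "subspace2 n (Vec n)" by (simp add: subspace2_def)

definition ext :: "(nat \<Rightarrow> bit) set \<Rightarrow> (nat \<Rightarrow> bit) \<Rightarrow> (nat \<Rightarrow> bit) set" where
  "ext U w = U \<union> vadd w ` U"

lemma ext_iff: "x \<in> ext U w \<longleftrightarrow> x \<in> U \<or> (\<exists>a\<in>U. x = vadd w a)"
  unfolding ext_def by blast

lemma ext_sub:
  assumes U: "subspace2 n U" and w: "w \<in> Vec n"
  shows "subspace2 n (ext U w)"
proof -
  have V: "ext U w \<subseteq> Vec n"
  proof
    fix x assume "x \<in> ext U w"
    then have "x \<in> U \<or> (\<exists>a\<in>U. x = vadd w a)" by (simp add: ext_iff)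
    then show "x \<in> Vec n" using U w sub_Vec Vec_add by blast
  qed
  have z: "vzero \<in> ext U w" using sub_zero[OF U] by (simp add: ext_iff)
  have c: "vadd x y \<in> ext U w" if "x \<in> ext U w" "y \<in> ext U w" for x y
  proof -
    have hx: "x \<in> U \<or> (\<exists>a\<in>U. x = vadd w a)" and hy: "y \<in> U \<or> (\<exists>a\<in>U. y = vadd w a)"
      using that by (simp_all add: ext_iff)
    show ?thesis
    proof (cases "x \<in> U")
      case xU: True
      show ?thesis
      proof (cases "y \<in> U")
        case True then show ?thesis using xU sub_add[OF U] by (simp add: ext_iff)
      next
        case False
        then obtain a where a: "a \<in> U" "y = vadd w a" using hy by blast
        have "vadd x y = vadd w (vadd x a)" using a by (metis vadd_assoc vadd_comm)
        moreover have "vadd x a \<in> U" using sub_add[OF U xU a(1)] .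
        ultimately show ?thesis by (auto simp add: ext_iff)
      qed
    next
      case xN: False
      then obtain a where a: "a \<in> U" "x = vadd w a" using hx by blast
      show ?thesis
      proof (cases "y \<in> U")
        case True
        have "vadd x y = vadd w (vadd a y)" using a by (metis vadd_assoc)
        moreover have "vadd a y \<in> U" using sub_add[OF U a(1) True] .
        ultimately show ?thesis by (auto simp add: ext_iff)
      next
        case False
        then obtain b where b: "b \<in> U" "y = vadd w b" using hy by blast
        have "vadd x y = vadd a b" using a b by (metis vadd_assoc vadd_cancel(1) vadd_comm)
        moreover have "vadd a b \<in> U" using sub_add[OF U a(1) b(1)] .
        ultimately show ?thesis by (auto simp add: ext_iff)
      qed
    qed
  qed
  show ?thesis using V z c by (simp add: subspace2_def)
qed

lemma ext_card:
  assumes U: "subspace2 n U" and w: "w \<notin> U"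
  shows "card (ext U w) = 2 * card U"
proof -
  have d: "U \<inter> vadd w ` U = {}"
  proof (rule ccontr)
    assume "U \<inter> vadd w ` U \<noteq> {}"
    then obtain a where a: "a \<in> U" "vadd w a \<in> U" by blast
    then have "vadd (vadd w a) a \<in> U" using sub_add[OF U] by blast
    then show False using w by simp
  qed
  have "card (vadd w ` U) = card U" by (rule card_image) (simp add: inj_on_def vadd_inj)
  then show ?thesis using d sub_finite[OF U] unfolding ext_def by (simp add: card_Un_disjoint)
qed

lemma ext_subset: "U \<subseteq> ext U w" unfolding ext_def by blast
lemma ext_mem: "subspace2 n U \<Longrightarrow> w \<in> ext U w"
  unfolding ext_def using sub_zero by (metis UnI2 image_eqI vadd_zero(1))
lemma ext_le:
  assumes "subspace2 n W" "U \<subseteq> W" "w \<in> W" shows "ext U w \<subseteq> W"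
  using assms sub_add unfolding ext_def by blast

lemma sub_zero_only: "subspace2 n {vzero}" by (simp add: subspace2_def)

lemma sub_chain:
  assumes U: "subspace2 n U" and cU: "card U = 2 ^ d"
  shows "m \<le> d \<Longrightarrow> \<exists>W. subspace2 n W \<and> W \<subseteq> U \<and> card W = 2 ^ m"
proof (induction m)
  case 0
  show ?case using sub_zero_only sub_zero[OF U] by (intro exI[of _ "{vzero}"]) auto
next
  case (Suc m)
  then obtain W where W: "subspace2 n W" "W \<subseteq> U" "card W = 2 ^ m" by auto
  have "card W < card U" using W(3) cU Suc.prems by simp
  then have "W \<noteq> U" by auto
  then obtain w where w: "w \<in> U" "w \<notin> W" using W(2) by blast
  have "w \<in> Vec n" using w U sub_Vec by blast
  then show ?case using ext_sub[OF W(1)] ext_card[OF W(1) w(2)] ext_le[OF U W(2) w(1)] W(3)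
    by (intro exI[of _ "ext W w"]) simp
qed

lemma sub_pow_aux:
  assumes U: "subspace2 n U"
  shows "subspace2 n W \<Longrightarrow> W \<subseteq> U \<Longrightarrow> card W = 2 ^ m \<Longrightarrow> \<exists>d. card U = 2 ^ d"
proof (induction "card U - card W" arbitrary: W m rule: less_induct)
  case less
  show ?case
  proof (cases "W = U")
    case True then show ?thesis using less by blast
  next
    case False
    then obtain w where w: "w \<in> U" "w \<notin> W" using less.prems(2) by blast
    have wV: "w \<in> Vec n" using w U sub_Vec by blast
    have e: "subspace2 n (ext W w)" "ext W w \<subseteq> U" "card (ext W w) = 2 ^ Suc m"
      using ext_sub[OF less.prems(1) wV] ext_le[OF U less.prems(2) w(1)]
        ext_card[OF less.prems(1) w(2)] less.prems(3) by auto
    have "card W < card (ext W w)" using e(3) less.prems(3) by simp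
    moreover have "card (ext W w) \<le> card U" using e(2) sub_finite[OF U] card_mono by blast
    ultimately have "card U - card (ext W w) < card U - card W" by linarith
    then show ?thesis using less.hyps e by blast
  qed
qed

lemma sub_pow: "subspace2 n U \<Longrightarrow> \<exists>d. card U = 2 ^ d"
  using sub_pow_aux[of n U "{vzero}" 0] sub_zero_only sub_zero by auto

lemma vdim_eq:
  assumes "card U = 2 ^ d" shows "vdim U = d"
  unfolding vdim_def
proof (rule the_equality)
  show "card U = 2 ^ d" by fact
  fix d' assume "card U = 2 ^ d'" then show "d' = d" using assms by simp
qed

lemma sub_card_vdim: "subspace2 n U \<Longrightarrow> card U = 2 ^ vdim U"
  using sub_pow vdim_eq by metis

lemma sub_Vec_vdim: "vdim (Vec n) = Suc n" using vdim_eq Vec_card' by blast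

lemma halving:
  fixes \<psi> :: "(nat \<Rightarrow> bit) \<Rightarrow> bit"
  assumes W: "subspace2 n W"
    and add: "\<forall>x\<in>W. \<forall>y\<in>W. \<psi> (vadd x y) = \<psi> x + \<psi> y"
    and w0: "w0 \<in> W" "\<psi> w0 = 1"
  shows "subspace2 n {w\<in>W. \<psi> w = 0}" "card W = 2 * card {w\<in>W. \<psi> w = 0}"
proof -
  let ?K = "{w\<in>W. \<psi> w = 0}"
  have "\<psi> (vadd vzero vzero) = \<psi> vzero + \<psi> vzero" using add sub_zero[OF W] by blast
  then have z: "\<psi> vzero = 0" by (metis bit_double vadd_zero(1))
  have "?K \<subseteq> Vec n" using sub_Vec[OF W] by blast
  moreover have "vzero \<in> ?K" using z sub_zero[OF W] by simp
  moreover have "\<forall>x\<in>?K. \<forall>y\<in>?K. vadd x y \<in> ?K" using add sub_add[OF W] by simp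
  ultimately show sK: "subspace2 n ?K" unfolding subspace2_def by blast
  have eq: "W = ?K \<union> vadd w0 ` ?K"
  proof
    show "W \<subseteq> ?K \<union> vadd w0 ` ?K"
    proof
      fix w assume w: "w \<in> W"
      show "w \<in> ?K \<union> vadd w0 ` ?K"
      proof (cases "\<psi> w = 0")
        case True then show ?thesis using w by blast
      next
        case False
        then have "\<psi> w = 1" by simp
        then have "\<psi> (vadd w0 w) = 0" using add w w0 by simp
        moreover have "vadd w0 w \<in> W" using sub_add[OF W w0(1) w] .
        moreover have "w = vadd w0 (vadd w0 w)" by simp
        ultimately show ?thesis by blast
      qed
    qed
    show "?K \<union> vadd w0 ` ?K \<subseteq> W" using sub_add[OF W w0(1)] by auto
  qed
  have d: "?K \<inter> vadd w0 ` ?K = {}"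
  proof (rule ccontr)
    assume "?K \<inter> vadd w0 ` ?K \<noteq> {}"
    then obtain a where a: "a \<in> ?K" "vadd w0 a \<in> ?K" by blast
    then have "\<psi> (vadd w0 a) = 1" using add w0 by simp
    then show False using a by simp
  qed
  have "card (vadd w0 ` ?K) = card ?K" by (rule card_image) (simp add: inj_on_def vadd_inj)
  moreover have "finite ?K" using sub_finite[OF sK] .
  ultimately show "card W = 2 * card ?K" using d by (subst eq) (simp add: card_Un_disjoint)
qed

lemma card_eq_sub: "finite B \<Longrightarrow> A \<subseteq> B \<Longrightarrow> card A = card B \<Longrightarrow> A = B"
  using card_subset_eq by blast

lemma bit_swap: "(x::bit) + y = z + w \<Longrightarrow> x + z = y + w"
  using bit_cases[of x] bit_cases[of y] bit_cases[of z] bit_cases[of w] by auto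

lemma vadd_swap: "vadd a b = vadd c d \<Longrightarrow> vadd a c = vadd b d"
  unfolding vadd_def fun_eq_iff using bit_swap by blast

lemma dsum_inj:
  assumes A: "subspace2 n A" and B: "subspace2 n B" and AB: "A \<inter> B = {vzero}"
  shows "inj_on (\<lambda>(a, b). vadd a b) (A \<times> B)"
proof (rule inj_onI, clarify)
  fix a b a' b' assume h: "a \<in> A" "b \<in> B" "a' \<in> A" "b' \<in> B" "vadd a b = vadd a' b'"
  from h(5) have "vadd a a' = vadd b b'" by (rule vadd_swap)
  moreover have "vadd a a' \<in> A" "vadd b b' \<in> B" using h sub_add A B by auto
  ultimately have "vadd a a' = vzero" using AB by auto
  then have "a = a'" by (simp add: vadd_eq_zero_iff)
  then show "a = a' \<and> b = b'" using h(5) vadd_inj by simp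
qed

lemma dsum_card:
  assumes A: "subspace2 n A" and B: "subspace2 n B" and AB: "A \<inter> B = {vzero}"
  shows "card ((\<lambda>(a, b). vadd a b) ` (A \<times> B)) = card A * card B"
  using card_image[OF dsum_inj[OF assms]] card_cartesian_product by simp

lemma dsum_all:
  assumes A: "subspace2 n A" and B: "subspace2 n B" and AB: "A \<inter> B = {vzero}"
    and c: "card A * card B = card W" and W: "subspace2 n W" "A \<subseteq> W" "B \<subseteq> W"
    and v: "v \<in> W"
  shows "\<exists>a\<in>A. \<exists>b\<in>B. v = vadd a b"
proof -
  have "(\<lambda>(a, b). vadd a b) ` (A \<times> B) \<subseteq> W"
  proof
    fix x assume "x \<in> (\<lambda>(a, b). vadd a b) ` (A \<times> B)"
    then obtain a b where "a \<in> A" "b \<in> B" "x = vadd a b" by auto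
    then show "x \<in> W" using W sub_add[OF W(1)] by auto
  qed
  moreover have "card ((\<lambda>(a, b). vadd a b) ` (A \<times> B)) = card W"
    using dsum_card[OF A B AB] c by simp
  ultimately have "(\<lambda>(a, b). vadd a b) ` (A \<times> B) = W"
    by (rule card_eq_sub[OF sub_finite[OF W(1)]])
  then obtain p where "p \<in> A \<times> B" "v = (\<lambda>(a, b). vadd a b) p" using v by (metis imageE)
  then show ?thesis by (cases p) auto
qed



definition pt :: "(nat \<Rightarrow> bit) \<Rightarrow> (nat \<Rightarrow> bit) set" where "pt x = {vzero, x}"

lemma pt_sub: "x \<in> Vec n \<Longrightarrow> subspace2 n (pt x)"
  unfolding pt_def subspace2_def by auto
lemma pt_card: "x \<noteq> vzero \<Longrightarrow> card (pt x) = 2"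
  unfolding pt_def by simp
lemma pt_inj: "pt x = pt y \<Longrightarrow> x \<noteq> vzero \<Longrightarrow> x = y"
  unfolding pt_def by (metis doubleton_eq_iff)

lemma Verts_iff: "U \<in> Verts n \<longleftrightarrow> subspace2 n U \<and> 1 \<le> vdim U \<and> vdim U \<le> n"
  by (simp add: Verts_def)
lemma Verts_card: "U \<in> Verts n \<Longrightarrow> card U = 2 ^ vdim U"
  unfolding Verts_def using sub_card_vdim by blast
lemma Verts_of_card: "subspace2 n U \<Longrightarrow> card U = 2 ^ k \<Longrightarrow> 1 \<le> k \<Longrightarrow> k \<le> n \<Longrightarrow> U \<in> Verts n \<and> vdim U = k"
  using vdim_eq by (simp add: Verts_def)
lemma Verts_sub: "U \<in> Verts n \<Longrightarrow> subspace2 n U" by (simp add: Verts_def)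

lemma pt_Verts: "x \<in> Vec n \<Longrightarrow> x \<noteq> vzero \<Longrightarrow> 1 \<le> n \<Longrightarrow> pt x \<in> Verts n \<and> vdim (pt x) = 1"
  using Verts_of_card[of n "pt x" 1] pt_sub pt_card by simp

lemma dim1:
  assumes "U \<in> Verts n" "vdim U = 1"
  shows "\<exists>x\<in>Vec n. x \<noteq> vzero \<and> U = pt x"
proof -
  have s: "subspace2 n U" using assms Verts_sub by blast
  have "card U = 2" using Verts_card[OF assms(1)] assms(2) by simp
  then obtain a b where ab: "U = {a, b}" "a \<noteq> b" by (auto simp: card_2_iff)
  have z: "vzero \<in> U" using sub_zero[OF s] .
  show ?thesis
  proof (cases "a = vzero")
    case True then show ?thesis using ab sub_Vec[OF s] unfolding pt_def by (intro bexI[of _ b]) auto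
  next
    case False
    then have "b = vzero" using z ab by auto
    then show ?thesis using ab sub_Vec[OF s] unfolding pt_def by (intro bexI[of _ a]) auto
  qed
qed

lemma index2:
  assumes H: "subspace2 n H" and c: "card (Vec n) = 2 * card H"
    and z: "z \<in> Vec n" "z \<notin> H" and y: "y \<in> Vec n" "y \<notin> H"
  shows "vadd y z \<in> H"
proof -
  have "ext H z \<subseteq> Vec n" using ext_le[OF sub_Vec_full sub_Vec[OF H] z(1)] .
  moreover have "card (ext H z) = card (Vec n)" using ext_card[OF H z(2)] c by simp
  ultimately have "ext H z = Vec n" using card_eq_sub[OF Vec_finite] by blast
  then have "y \<in> ext H z" using y by simp
  then obtain a where "a \<in> H" "y = vadd z a" using y(2) by (auto simp: ext_iff)
  then show ?thesis by simp
qed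

locale dual =
  fixes n :: nat and \<theta> :: "(nat \<Rightarrow> bit) set \<Rightarrow> (nat \<Rightarrow> bit) set"
  assumes n2: "2 \<le> n" and dual: "duality n \<theta>"
begin

lemma dual_parts1: "bij_betw \<theta> (Verts n) (Verts n)"
  using dual[unfolded duality_def] by (rule conjunct1)
lemma dual_parts2: "\<forall>U\<in>Verts n. \<forall>W\<in>Verts n. incident U W \<longleftrightarrow> incident (\<theta> U) (\<theta> W)"
  using dual[unfolded duality_def] by (rule conjunct1[OF conjunct2])
lemma dual_parts3: "\<forall>U\<in>Verts n. vdim (\<theta> U) = n + 1 - vdim U"
  using dual[unfolded duality_def] by (rule conjunct2[OF conjunct2])
lemmas dual_parts = dual_parts1 dual_parts2 dual_parts3

lemma th_Verts: "U \<in> Verts n \<Longrightarrow> \<theta> U \<in> Verts n"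
  by (rule bij_betw_apply[OF dual_parts(1)])
lemma th_inj: "U \<in> Verts n \<Longrightarrow> W \<in> Verts n \<Longrightarrow> \<theta> U = \<theta> W \<Longrightarrow> U = W"
  using bij_betw_imp_inj_on[OF dual_parts(1)] inj_onD by metis
lemma th_surj: "W \<in> Verts n \<Longrightarrow> \<exists>U\<in>Verts n. \<theta> U = W"
  using bij_betw_imp_surj_on[OF dual_parts(1)] by (metis imageE)
lemma th_inc: "U \<in> Verts n \<Longrightarrow> W \<in> Verts n \<Longrightarrow> incident U W \<longleftrightarrow> incident (\<theta> U) (\<theta> W)"
  using dual_parts(2) by blast
lemma th_dim: "U \<in> Verts n \<Longrightarrow> vdim (\<theta> U) = Suc n - vdim U"
  using dual_parts(3) by simp
lemma th_card: "U \<in> Verts n \<Longrightarrow> card (\<theta> U) = 2 ^ (Suc n - vdim U)"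
proof -
  assume U: "U \<in> Verts n"
  have "card (\<theta> U) = 2 ^ vdim (\<theta> U)" using Verts_card[OF th_Verts[OF U]] .
  then show ?thesis using th_dim[OF U] by simp
qed

lemma Verts_mono_dim:
  assumes "U \<in> Verts n" "W \<in> Verts n" "U \<subseteq> W" shows "vdim U \<le> vdim W"
proof -
  have "card U \<le> card W" using assms sub_finite Verts_sub card_mono by metis
  then show ?thesis using Verts_card assms by (metis power_le_imp_le_exp one_less_numeral_iff semiring_norm(76))
qed

lemma th_anti:
  assumes U: "U \<in> Verts n" and W: "W \<in> Verts n" and UW: "U \<subseteq> W"
  shows "\<theta> W \<subseteq> \<theta> U"
proof -
  have "incident (\<theta> U) (\<theta> W)" using th_inc[OF U W] UW by (simp add: incident_def)
  then consider "\<theta> U \<subseteq> \<theta> W" | "\<theta> W \<subseteq> \<theta> U" unfolding incident_def by blast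
  then show ?thesis
  proof cases
    case 1
    have d: "vdim U \<le> vdim W" using Verts_mono_dim[OF U W UW] .
    have "vdim W \<le> n" "vdim U \<ge> 1" using U W by (auto simp: Verts_def)
    then have "card (\<theta> W) \<le> card (\<theta> U)" using th_card[OF U] th_card[OF W] d by simp
    moreover have "card (\<theta> U) \<le> card (\<theta> W)"
      using 1 th_Verts[OF W] Verts_sub sub_finite card_mono by metis
    ultimately have "\<theta> U = \<theta> W"
      using 1 card_eq_sub[OF sub_finite[OF Verts_sub[OF th_Verts[OF W]]]] by simp
    then show ?thesis by simp
  qed simp
qed

lemma th_anti_rev:
  assumes U: "U \<in> Verts n" and W: "W \<in> Verts n" and s: "\<theta> W \<subseteq> \<theta> U"
  shows "U \<subseteq> W"
proof -
  have "incident U W" using th_inc[OF U W] s by (simp add: incident_def)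
  then consider "U \<subseteq> W" | "W \<subseteq> U" unfolding incident_def by blast
  then show ?thesis
  proof cases
    case 2
    then have "\<theta> U \<subseteq> \<theta> W" using th_anti[OF W U] by simp
    then have "\<theta> U = \<theta> W" using s by simp
    then show ?thesis using th_inj[OF U W] by simp
  qed simp
qed

definition Hp :: "(nat \<Rightarrow> bit) \<Rightarrow> (nat \<Rightarrow> bit) set" where "Hp x = \<theta> (pt x)"

lemma pt_V: "x \<in> Vec n \<Longrightarrow> x \<noteq> vzero \<Longrightarrow> pt x \<in> Verts n \<and> vdim (pt x) = 1"
  using pt_Verts n2 by simp

lemma Hp_props:
  assumes "x \<in> Vec n" "x \<noteq> vzero"
  shows "Hp x \<in> Verts n" "subspace2 n (Hp x)" "card (Hp x) = 2 ^ n" "Hp x \<subseteq> Vec n"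
proof -
  show h: "Hp x \<in> Verts n" using th_Verts pt_V assms unfolding Hp_def by blast
  show s: "subspace2 n (Hp x)" using Verts_sub[OF h] .
  show "card (Hp x) = 2 ^ n" using th_card pt_V assms unfolding Hp_def by simp
  show "Hp x \<subseteq> Vec n" using sub_Vec[OF s] .
qed

definition \<beta> :: "(nat \<Rightarrow> bit) \<Rightarrow> (nat \<Rightarrow> bit) \<Rightarrow> bit" where
  "\<beta> x y = (if x = vzero then 0 else if y \<in> Hp x then 0 else 1)"

lemma \<beta>_zero1[simp]: "\<beta> vzero y = 0" by (simp add: \<beta>_def)
lemma \<beta>_H: "x \<noteq> vzero \<Longrightarrow> \<beta> x y = 0 \<longleftrightarrow> y \<in> Hp x" by (simp add: \<beta>_def)
lemma \<beta>_H1: "x \<noteq> vzero \<Longrightarrow> \<beta> x y = 1 \<longleftrightarrow> y \<notin> Hp x" by (simp add: \<beta>_def)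

lemma \<beta>_add2:
  assumes x: "x \<in> Vec n" and y: "y \<in> Vec n" and z: "z \<in> Vec n"
  shows "\<beta> x (vadd y z) = \<beta> x y + \<beta> x z"
proof (cases "x = vzero")
  case True then show ?thesis by simp
next
  case False
  note hp = Hp_props[OF x False]
  have c: "card (Vec n) = 2 * card (Hp x)" using hp(3) by simp
  show ?thesis
  proof (cases "y \<in> Hp x"; cases "z \<in> Hp x")
    assume "y \<in> Hp x" "z \<in> Hp x"
    then show ?thesis using sub_add[OF hp(2)] False by (simp add: \<beta>_def)
  next
    assume a: "y \<in> Hp x" "z \<notin> Hp x"
    have "vadd y z \<notin> Hp x"
    proof
      assume "vadd y z \<in> Hp x"
      then have "vadd y (vadd y z) \<in> Hp x" using sub_add[OF hp(2) a(1)] by blast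
      then show False using a by simp
    qed
    then show ?thesis using a False by (simp add: \<beta>_def)
  next
    assume a: "y \<notin> Hp x" "z \<in> Hp x"
    have "vadd y z \<notin> Hp x"
    proof
      assume "vadd y z \<in> Hp x"
      then have "vadd (vadd y z) z \<in> Hp x" using sub_add[OF hp(2) _ a(2)] by blast
      then show False using a by simp
    qed
    then show ?thesis using a False by (simp add: \<beta>_def)
  next
    assume a: "y \<notin> Hp x" "z \<notin> Hp x"
    have "vadd y z \<in> Hp x" using index2[OF hp(2) c z a(2) y a(1)] .
    then show ?thesis using a False by (simp add: \<beta>_def)
  qed
qed

end


lemma line_sub:
  assumes "x \<in> Vec n" "y \<in> Vec n"
  shows "subspace2 n {vzero, x, y, vadd x y}"
proof -
  have "vadd y x = vadd x y" by (rule vadd_comm)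
  moreover have "vadd y (vadd x y) = x" by (rule vadd_cancel2(1))
  moreover have "vadd (vadd x y) y = x" by (rule vadd_cancel(2))
  ultimately show ?thesis using assms unfolding subspace2_def by auto
qed

lemma line_card:
  assumes "x \<noteq> vzero" "y \<noteq> vzero" "x \<noteq> y"
  shows "card {vzero, x, y, vadd x y} = 4"
proof -
  have "vadd x y \<noteq> vzero" using assms vadd_eq_zero_iff by simp
  moreover have "vadd x y \<noteq> x" using assms(2) by (metis vadd_cancel2(2) vadd_self)
  moreover have "vadd x y \<noteq> y" using assms(1) by (metis vadd_cancel(2) vadd_self)
  ultimately show ?thesis using assms by simp
qed

context dual begin

lemma \<beta>_mem: "x \<noteq> vzero \<Longrightarrow> \<beta> x y = 0 \<Longrightarrow> y \<in> Hp x" using \<beta>_H by blast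

lemma H_diff:
  assumes x: "x \<in> Vec n" "x \<noteq> vzero" and y: "y \<in> Vec n" "y \<noteq> vzero" and xy: "x \<noteq> y"
  shows "\<exists>a\<in>Hp x. a \<notin> Hp y"
proof (rule ccontr)
  assume "\<not> ?thesis"
  then have "Hp x \<subseteq> Hp y" by blast
  moreover have "card (Hp x) = card (Hp y)" using Hp_props x y by simp
  ultimately have "Hp x = Hp y" using card_eq_sub sub_finite Hp_props(2)[OF y] by metis
  then have "pt x = pt y" using th_inj pt_V x y unfolding Hp_def by blast
  then show False using xy pt_inj x by blast
qed

lemma line_facts:
  assumes x: "x \<in> Vec n" "x \<noteq> vzero" and y: "y \<in> Vec n" "y \<noteq> vzero" and xy: "x \<noteq> y"
  shows "Hp x \<inter> Hp y \<subseteq> Hp (vadd x y)"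
    and "\<And>a. a \<in> Hp x \<Longrightarrow> a \<notin> Hp y \<Longrightarrow> a \<notin> Hp (vadd x y)"
proof -
  define s where "s = vadd x y"
  have sV: "s \<in> Vec n" using x y by (simp add: s_def)
  have s0: "s \<noteq> vzero" using xy vadd_eq_zero_iff by (simp add: s_def)
  have sx: "s \<noteq> x" using y(2) unfolding s_def by (metis vadd_cancel2(2) vadd_self)
  define L where "L = {vzero, x, y, s}"
  have Ls: "subspace2 n L" using line_sub[OF x(1) y(1)] by (simp add: L_def s_def)
  have Lc: "card L = 2 ^ 2" using line_card[OF x(2) y(2) xy] by (simp add: L_def s_def)
  have LV: "L \<in> Verts n" "vdim L = 2" using Verts_of_card[OF Ls Lc] n2 by auto
  have thL: "card (\<theta> L) = 2 ^ (n - 1)" using th_card[OF LV(1)] LV(2) by simp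
  have px: "pt x \<in> Verts n" and py: "pt y \<in> Verts n" and ps: "pt s \<in> Verts n"
    using pt_V x y sV s0 by auto
  have "\<theta> L \<subseteq> Hp x" unfolding Hp_def by (rule th_anti[OF px LV(1)]) (auto simp: pt_def L_def)
  moreover have "\<theta> L \<subseteq> Hp y" unfolding Hp_def by (rule th_anti[OF py LV(1)]) (auto simp: pt_def L_def)
  ultimately have LK: "\<theta> L \<subseteq> Hp x \<inter> Hp y" by blast
  have LS: "\<theta> L \<subseteq> Hp s" unfolding Hp_def by (rule th_anti[OF ps LV(1)]) (auto simp: pt_def L_def)
  obtain a0 where a0: "a0 \<in> Hp x" "a0 \<notin> Hp y" using H_diff[OF x y xy] by blast
  note hx = Hp_props[OF x] and hy = Hp_props[OF y] and hs = Hp_props[OF sV s0]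
  have Keq: "Hp x \<inter> Hp y = {w \<in> Hp x. \<beta> y w = 0}" using \<beta>_H[OF y(2)] by blast
  have addy: "\<forall>u\<in>Hp x. \<forall>v\<in>Hp x. \<beta> y (vadd u v) = \<beta> y u + \<beta> y v"
    using \<beta>_add2 y(1) hx(4) by blast
  have "\<beta> y a0 = 1" using a0 \<beta>_H1[OF y(2)] by blast
  from halving[OF hx(2) addy a0(1) this]
  have "card (Hp x) = 2 * card (Hp x \<inter> Hp y)" using Keq by simp
  moreover have "(2::nat) ^ n = 2 * 2 ^ (n - 1)" using n2 by (cases n) auto
  ultimately have cK: "card (Hp x \<inter> Hp y) = 2 ^ (n - 1)" using hx(3) by simp
  have finK: "finite (Hp x \<inter> Hp y)" using sub_finite[OF hx(2)] by blast
  have "\<theta> L = Hp x \<inter> Hp y" using card_eq_sub[OF finK LK] thL cK by simp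
  then show K: "Hp x \<inter> Hp y \<subseteq> Hp (vadd x y)" using LS s_def by simp
  fix a assume a: "a \<in> Hp x" "a \<notin> Hp y"
  show "a \<notin> Hp (vadd x y)"
  proof
    assume as: "a \<in> Hp (vadd x y)"
    have "Hp x \<subseteq> Hp s"
    proof
      fix z assume z: "z \<in> Hp x"
      show "z \<in> Hp s"
      proof (cases "z \<in> Hp y")
        case True then show ?thesis using K z s_def by auto
      next
        case False
        have za: "vadd z a \<in> Hp x" using sub_add[OF hx(2) z a(1)] .
        have "\<beta> y (vadd z a) = \<beta> y z + \<beta> y a" using \<beta>_add2 y(1) hx(4) z a(1) by blast
        also have "\<dots> = 0" using False a(2) \<beta>_H1[OF y(2), of z] \<beta>_H1[OF y(2), of a] by simp
        finally have "vadd z a \<in> Hp y" using \<beta>_H[OF y(2)] by blast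
        then have "vadd z a \<in> Hp s" using K za s_def by auto
        then have "vadd (vadd z a) a \<in> Hp s" using sub_add[OF hs(2) _ as[folded s_def]] by blast
        then show ?thesis by simp
      qed
    qed
    moreover have "card (Hp x) = card (Hp s)" using hx(3) hs(3) by simp
    ultimately have "Hp x = Hp s" by (rule card_eq_sub[OF sub_finite[OF hs(2)]])
    then have "pt x = pt s" using th_inj px ps unfolding Hp_def by blast
    then show False using sx pt_inj x(2) by metis
  qed
qed

lemma \<beta>_add1:
  assumes x: "x \<in> Vec n" and y: "y \<in> Vec n" and z: "z \<in> Vec n"
  shows "\<beta> (vadd x y) z = \<beta> x z + \<beta> y z"
proof -
  consider "x = vzero" | "y = vzero" | "x = y" | "x \<noteq> vzero" "y \<noteq> vzero" "x \<noteq> y" by blast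
  then show ?thesis
  proof cases
    case 1 then show ?thesis by simp
  next
    case 2 then show ?thesis by simp
  next
    case 3 then show ?thesis by simp
  next
    case 4
    define s where "s = vadd x y"
    have sV: "s \<in> Vec n" using x y by (simp add: s_def)
    have s0: "s \<noteq> vzero" using 4 vadd_eq_zero_iff by (simp add: s_def)
    note hx = Hp_props[OF x 4(1)] and hy = Hp_props[OF y 4(2)] and hs = Hp_props[OF sV s0]
    note lf = line_facts[OF x 4(1) y 4(2) 4(3), folded s_def]
    note lf' = line_facts[OF y 4(2) x 4(1) 4(3)[symmetric]]
    have syx: "vadd y x = s" by (simp add: s_def vadd_comm)
    obtain a where a: "a \<in> Hp x" "a \<notin> Hp y" using H_diff[OF x 4(1) y 4(2) 4(3)] by blast
    obtain b where b: "b \<in> Hp y" "b \<notin> Hp x" using H_diff[OF y 4(2) x 4(1) 4(3)[symmetric]] by blast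
    have aV: "a \<in> Vec n" and bV: "b \<in> Vec n" using a b hx(4) hy(4) by auto
    have as: "a \<notin> Hp s" using lf(2)[OF a] .
    have bs': "b \<notin> Hp s" using lf'(2)[OF b] syx by simp
    have xa: "\<beta> x a = 0" "\<beta> y a = 1" "\<beta> s a = 1"
      using a(1) \<beta>_H[OF 4(1), of a] apply simp
      using a(2) \<beta>_H1[OF 4(2), of a] apply simp
      using as \<beta>_H1[OF s0, of a] by simp
    have xb: "\<beta> x b = 1" "\<beta> y b = 0" "\<beta> s b = 1"
      using b(2) \<beta>_H1[OF 4(1), of b] apply simp
      using b(1) \<beta>_H[OF 4(2), of b] apply simp
      using bs' \<beta>_H1[OF s0, of b] by simp
    have K: "\<beta> s w = 0" if "\<beta> x w = 0" "\<beta> y w = 0" for w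
    proof -
      have "w \<in> Hp x" "w \<in> Hp y" using that \<beta>_H 4 by auto
      then have "w \<in> Hp s" using lf(1) by blast
      then show ?thesis using \<beta>_H[OF s0] by blast
    qed
    have bs: "\<And>u v. u \<in> Vec n \<Longrightarrow> v \<in> Vec n \<Longrightarrow> \<beta> s (vadd u v) = \<beta> s u + \<beta> s v"
      using \<beta>_add2 sV by blast
    have bx: "\<And>u v. u \<in> Vec n \<Longrightarrow> v \<in> Vec n \<Longrightarrow> \<beta> x (vadd u v) = \<beta> x u + \<beta> x v"
      using \<beta>_add2 x by blast
    have by': "\<And>u v. u \<in> Vec n \<Longrightarrow> v \<in> Vec n \<Longrightarrow> \<beta> y (vadd u v) = \<beta> y u + \<beta> y v"
      using \<beta>_add2 y by blast
    have "\<beta> s z = \<beta> x z + \<beta> y z"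
    proof (cases "\<beta> x z = 0"; cases "\<beta> y z = 0")
      assume "\<beta> x z = 0" "\<beta> y z = 0"
      then show ?thesis using K z by simp
    next
      assume h: "\<beta> x z = 0" "\<beta> y z \<noteq> 0"
      have "\<beta> s (vadd z a) = 0" using K bx[OF z aV] by'[OF z aV] h xa by simp
      then have "\<beta> s z + \<beta> s a = 0" using bs[OF z aV] by simp
      then have "\<beta> s z = 1" using xa(3) bit_add_eq0 by metis
      then show ?thesis using h by simp
    next
      assume h: "\<beta> x z \<noteq> 0" "\<beta> y z = 0"
      have "\<beta> s (vadd z b) = 0" using K bx[OF z bV] by'[OF z bV] h xb by simp
      then have "\<beta> s z + \<beta> s b = 0" using bs[OF z bV] by simp
      then have "\<beta> s z = 1" using xb(3) bit_add_eq0 by metis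
      then show ?thesis using h by simp
    next
      assume h: "\<beta> x z \<noteq> 0" "\<beta> y z \<noteq> 0"
      have abV: "vadd a b \<in> Vec n" using aV bV by simp
      have "\<beta> s (vadd z (vadd a b)) = 0"
        using K bx[OF z abV] by'[OF z abV] bx[OF aV bV] by'[OF aV bV] h xa xb by simp
      then have "\<beta> s z = 0" using bs[OF z abV] bs[OF aV bV] xa xb by simp
      then show ?thesis using h by simp
    qed
    then show ?thesis by (simp add: s_def)
  qed
qed

end


context dual begin

lemma Hp_V: "x \<in> Vec n \<Longrightarrow> x \<noteq> vzero \<Longrightarrow> y \<in> Hp x \<Longrightarrow> y \<in> Vec n"
  using Hp_props(4) by blast

lemma perp_pt:
  assumes x: "x \<in> Vec n" "x \<noteq> vzero"
  shows "perp n \<beta> (pt x) = Hp x"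
proof -
  have "perp n \<beta> (pt x) = {y \<in> Vec n. \<beta> x y = 0}" unfolding perp_def pt_def by auto
  also have "\<dots> = Hp x" using \<beta>_H[OF x(2)] Hp_V[OF x] by auto
  finally show ?thesis .
qed

lemma th_perp_aux:
  "\<forall>U. U \<in> Verts n \<longrightarrow> vdim U = k \<longrightarrow> \<theta> U = perp n \<beta> U"
proof (induction k)
  case 0
  then show ?case by (simp add: Verts_def)
next
  case (Suc k)
  show ?case
  proof (intro allI impI)
    fix U assume U: "U \<in> Verts n" and dU: "vdim U = Suc k"
    show "\<theta> U = perp n \<beta> U"
    proof (cases "k = 0")
      case True
      then obtain x where x: "x \<in> Vec n" "x \<noteq> vzero" "U = pt x" using dim1[OF U] dU by auto
      then show ?thesis using perp_pt[OF x(1,2)] by (simp add: Hp_def)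
    next
      case False
      have sU: "subspace2 n U" using Verts_sub[OF U] .
      have cU: "card U = 2 ^ Suc k" using Verts_card[OF U] dU by simp
      have kn: "Suc k \<le> n" using U dU by (simp add: Verts_def)
      obtain U' where U': "subspace2 n U'" "U' \<subseteq> U" "card U' = 2 ^ k"
        using sub_chain[OF sU cU, of k] by auto
      have U'V: "U' \<in> Verts n" "vdim U' = k" using Verts_of_card[OF U'(1) U'(3)] False kn by auto
      have "U' \<noteq> U" using U'(3) cU by auto
      then obtain u where u: "u \<in> U" "u \<notin> U'" using U'(2) by blast
      have u0: "u \<noteq> vzero" using u sub_zero[OF U'(1)] by auto
      have uV: "u \<in> Vec n" using u sub_Vec[OF sU] by blast
      have pu: "pt u \<in> Verts n" using pt_V[OF uV u0] by simp
      have IH: "\<theta> U' = perp n \<beta> U'" using Suc.IH U'V by blast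
      have s1: "\<theta> U \<subseteq> \<theta> U'" using th_anti[OF U'V(1) U U'(2)] .
      have s2: "\<theta> U \<subseteq> Hp u" unfolding Hp_def
        by (rule th_anti[OF pu U]) (use u sub_zero[OF sU] in \<open>auto simp: pt_def\<close>)
      have "\<not> \<theta> U' \<subseteq> Hp u"
      proof
        assume "\<theta> U' \<subseteq> Hp u"
        then have "pt u \<subseteq> U'" using th_anti_rev[OF pu U'V(1)] unfolding Hp_def by blast
        then show False using u(2) by (simp add: pt_def)
      qed
      then obtain w0 where w0: "w0 \<in> \<theta> U'" "w0 \<notin> Hp u" by blast
      have tU': "subspace2 n (\<theta> U')" using Verts_sub[OF th_Verts[OF U'V(1)]] .
      have w0b: "\<beta> u w0 = 1" using w0(2) \<beta>_H1[OF u0] by blast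
      have addu: "\<forall>a\<in>\<theta> U'. \<forall>b\<in>\<theta> U'. \<beta> u (vadd a b) = \<beta> u a + \<beta> u b"
        using \<beta>_add2 uV sub_Vec[OF tU'] by blast
      note hv = halving[OF tU' addu w0(1) w0b]
      let ?K = "{w \<in> \<theta> U'. \<beta> u w = 0}"
      have ctU': "card (\<theta> U') = 2 ^ (Suc n - k)" using th_card[OF U'V(1)] U'V(2) by simp
      have ctU: "card (\<theta> U) = 2 ^ (n - k)" using th_card[OF U] dU by simp
      have "(2::nat) ^ (Suc n - k) = 2 * 2 ^ (n - k)" using kn by (simp add: Suc_diff_le)
      then have cK: "card ?K = card (\<theta> U)" using hv(2) ctU' ctU by simp
      have "\<theta> U \<subseteq> ?K"
      proof
        fix y assume y: "y \<in> \<theta> U"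
        then have "y \<in> \<theta> U'" "y \<in> Hp u" using s1 s2 by auto
        then show "y \<in> ?K" using \<beta>_H[OF u0, of y] by simp
      qed
      then have tUK: "\<theta> U = ?K" using cK[symmetric] by (rule card_eq_sub[OF sub_finite[OF hv(1)]])
      have Uext: "U = ext U' u"
      proof -
        have "ext U' u \<subseteq> U" using ext_le[OF sU U'(2) u(1)] .
        moreover have "card (ext U' u) = card U" using ext_card[OF U'(1) u(2)] U'(3) cU by simp
        ultimately show ?thesis by (rule card_eq_sub[OF sub_finite[OF sU], symmetric])
      qed
      show ?thesis
      proof
        show "\<theta> U \<subseteq> perp n \<beta> U"
        proof
          fix y assume y: "y \<in> \<theta> U"
          have yp: "y \<in> perp n \<beta> U'" using y s1 IH by blast
          have yu: "\<beta> u y = 0" using y tUK by blast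
          have yV: "y \<in> Vec n" using yp by (simp add: perp_def)
          have "\<beta> v y = 0" if v: "v \<in> U" for v
          proof -
            have "v \<in> U' \<or> (\<exists>a\<in>U'. v = vadd u a)" using v Uext ext_iff by blast
            then show ?thesis
            proof
              assume "v \<in> U'" then show ?thesis using yp by (simp add: perp_def)
            next
              assume "\<exists>a\<in>U'. v = vadd u a"
              then obtain a where a: "a \<in> U'" "v = vadd u a" by blast
              have "a \<in> Vec n" using a(1) sub_Vec[OF U'(1)] by blast
              then have "\<beta> v y = \<beta> u y + \<beta> a y" using \<beta>_add1 uV yV a(2) by simp
              then show ?thesis using yu yp a(1) by (simp add: perp_def)
            qed
          qed
          then show "y \<in> perp n \<beta> U" using yV by (simp add: perp_def)
        qed
        show "perp n \<beta> U \<subseteq> \<theta> U"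
        proof
          fix y assume y: "y \<in> perp n \<beta> U"
          then have "y \<in> perp n \<beta> U'" using U'(2) by (auto simp: perp_def)
          then have "y \<in> \<theta> U'" using IH by simp
          moreover have "\<beta> u y = 0" using y u(1) by (simp add: perp_def)
          ultimately show "y \<in> \<theta> U" using tUK by blast
        qed
      qed
    qed
  qed
qed

lemma th_perp: "U \<in> Verts n \<Longrightarrow> \<theta> U = perp n \<beta> U"
  using th_perp_aux by blast

lemma Hp_proper:
  assumes x: "x \<in> Vec n" "x \<noteq> vzero"
  shows "\<exists>y\<in>Vec n. \<beta> x y = 1"
proof (rule ccontr)
  assume "\<not> ?thesis"
  then have "Vec n \<subseteq> Hp x" using \<beta>_H1[OF x(2)] by auto
  then have "card (Vec n) \<le> card (Hp x)" using card_mono sub_finite[OF Hp_props(2)[OF x]] by blast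
  then show False using Hp_props(3)[OF x] by simp
qed

lemma RN_V:
  assumes y: "y \<in> Vec n" "y \<noteq> vzero"
  shows "\<exists>x\<in>Vec n. \<beta> x y = 1"
proof -
  obtain i where i: "y i \<noteq> 0" using y(2) unfolding vzero_def by (meson ext)
  then have yi: "y i = 1" by simp
  let ?E = "{v \<in> Vec n. v i = 0}"
  have add: "\<forall>a\<in>Vec n. \<forall>b\<in>Vec n. vadd a b i = a i + b i" by (simp add: vadd_def)
  note hv = halving[OF sub_Vec_full add y(1) yi]
  have cE: "card ?E = 2 ^ n" using hv(2) by simp
  have EV: "?E \<in> Verts n" "vdim ?E = n" using Verts_of_card[OF hv(1) cE] n2 by auto
  obtain P where P: "P \<in> Verts n" "\<theta> P = ?E" using th_surj[OF EV(1)] by blast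
  have "vdim P = 1" using th_dim[OF P(1)] P(2) EV(2) P(1) by (auto simp: Verts_def)
  then obtain x where x: "x \<in> Vec n" "x \<noteq> vzero" "P = pt x" using dim1[OF P(1)] by blast
  have "y \<notin> Hp x" using P(2) x(3) yi unfolding Hp_def by auto
  then show ?thesis using x \<beta>_H1 by blast
qed

lemma Qadd:
  assumes "x \<in> Vec n" "y \<in> Vec n"
  shows "\<beta> (vadd x y) (vadd x y) = \<beta> x x + \<beta> x y + (\<beta> y x + \<beta> y y)"
proof -
  have "\<beta> (vadd x y) (vadd x y) = \<beta> x (vadd x y) + \<beta> y (vadd x y)"
    using \<beta>_add1 assms by simp
  also have "\<dots> = \<beta> x x + \<beta> x y + (\<beta> y x + \<beta> y y)" using \<beta>_add2 assms by simp
  finally show ?thesis .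
qed

end


context dual begin

lemma \<beta>_zero2: "x \<in> Vec n \<Longrightarrow> \<beta> x vzero = 0"
proof (cases "x = vzero")
  case False
  assume x: "x \<in> Vec n"
  then have "vzero \<in> Hp x" using sub_zero[OF Hp_props(2)[OF x False]] by blast
  then show ?thesis using \<beta>_H False by blast
qed simp

lemma symm:
  assumes alt: "\<forall>x\<in>Vec n. \<beta> x x = 0" and x: "x \<in> Vec n" and y: "y \<in> Vec n"
  shows "\<beta> x y = \<beta> y x"
proof -
  have "\<beta> (vadd x y) (vadd x y) = 0" using alt x y by simp
  then have "\<beta> x y + \<beta> y x = 0" using Qadd[OF x y] alt x y by simp
  then show ?thesis using bit_add_eq0 by blast
qed

lemma symp_count:
  assumes alt: "\<forall>x\<in>Vec n. \<beta> x x = 0"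
  shows "subspace2 n W \<Longrightarrow> (\<forall>x\<in>W. x \<noteq> vzero \<longrightarrow> (\<exists>y\<in>W. \<beta> x y = 1)) \<Longrightarrow> \<exists>m. card W = 4 ^ m"
proof (induction "card W" arbitrary: W rule: less_induct)
  case less
  have sW: "subspace2 n W" by fact
  have WV: "W \<subseteq> Vec n" using sub_Vec[OF sW] .
  have z: "vzero \<in> W" using sub_zero[OF sW] .
  show ?case
  proof (cases "W = {vzero}")
    case True then show ?thesis by (intro exI[of _ 0]) simp
  next
    case False
    then obtain x where x: "x \<in> W" "x \<noteq> vzero" using z by blast
    obtain y where y: "y \<in> W" "\<beta> x y = 1" using less.prems(2) x by blast
    have xV: "x \<in> Vec n" and yV: "y \<in> Vec n" using x y WV by auto
    have sy: "\<beta> y x = 1" using symm[OF alt xV yV] y by simp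
    have xx: "\<beta> x x = 0" and yy: "\<beta> y y = 0" using alt xV yV by auto
    have y0: "y \<noteq> vzero" using y(2) \<beta>_zero2[OF xV] by auto
    have xy: "x \<noteq> y" using xx y(2) by auto
    define P where "P = {vzero, x, y, vadd x y}"
    have sP: "subspace2 n P" using line_sub[OF xV yV] by (simp add: P_def)
    have cP: "card P = 4" using line_card[OF x(2) y0 xy] by (simp add: P_def)
    have PW: "P \<subseteq> W" using z x y sub_add[OF sW] by (simp add: P_def)
    define W' where "W' = {w \<in> W. \<beta> x w = 0 \<and> \<beta> y w = 0}"
    have W'W: "W' \<subseteq> W" by (auto simp: W'_def)
    have bx: "\<And>a b. a \<in> W \<Longrightarrow> b \<in> W \<Longrightarrow> \<beta> x (vadd a b) = \<beta> x a + \<beta> x b"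
      using \<beta>_add2 xV WV by blast
    have by': "\<And>a b. a \<in> W \<Longrightarrow> b \<in> W \<Longrightarrow> \<beta> y (vadd a b) = \<beta> y a + \<beta> y b"
      using \<beta>_add2 yV WV by blast
    have sW': "subspace2 n W'"
    proof -
      have "W' \<subseteq> Vec n" using W'W WV by blast
      moreover have "vzero \<in> W'" using z \<beta>_zero2 xV yV by (simp add: W'_def)
      moreover have "\<forall>a\<in>W'. \<forall>b\<in>W'. vadd a b \<in> W'"
        using bx by' sub_add[OF sW] by (simp add: W'_def)
      ultimately show ?thesis by (simp add: subspace2_def)
    qed
    have PW': "P \<inter> W' = {vzero}"
    proof -
      have "x \<notin> W'" using sy by (simp add: W'_def)
      moreover have "y \<notin> W'" using y by (simp add: W'_def)
      moreover have "vadd x y \<notin> W'" using bx[OF x(1) y(1)] xx y(2) by (simp add: W'_def)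
      moreover have "vzero \<in> W'" using sub_zero[OF sW'] .
      ultimately show ?thesis by (auto simp: P_def)
    qed
    have dec: "\<exists>p\<in>P. vadd p w \<in> W'" if w: "w \<in> W" for w
    proof -
      have c1: "\<beta> x w = 0 \<or> \<beta> x w = 1" and c2: "\<beta> y w = 0 \<or> \<beta> y w = 1" using bit_cases by auto
      have xyW: "vadd x y \<in> W" using sub_add[OF sW x(1) y(1)] .
      show ?thesis
      proof (cases "\<beta> x w = 0"; cases "\<beta> y w = 0")
        assume "\<beta> x w = 0" "\<beta> y w = 0"
        then show ?thesis using w by (intro bexI[of _ vzero]) (auto simp: W'_def P_def)
      next
        assume h: "\<beta> x w = 0" "\<beta> y w \<noteq> 0"
        have "vadd x w \<in> W'" using h bx[OF x(1) w] by'[OF x(1) w] xx sy sub_add[OF sW x(1) w]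
          by (simp add: W'_def)
        then show ?thesis by (intro bexI[of _ x]) (auto simp: P_def)
      next
        assume h: "\<beta> x w \<noteq> 0" "\<beta> y w = 0"
        have "vadd y w \<in> W'" using h bx[OF y(1) w] by'[OF y(1) w] yy y(2) sub_add[OF sW y(1) w]
          by (simp add: W'_def)
        then show ?thesis by (intro bexI[of _ y]) (auto simp: P_def)
      next
        assume h: "\<beta> x w \<noteq> 0" "\<beta> y w \<noteq> 0"
        have "vadd (vadd x y) w \<in> W'"
          using h bx[OF xyW w] by'[OF xyW w] bx[OF x(1) y(1)] by'[OF x(1) y(1)] xx yy y(2) sy
            sub_add[OF sW xyW w]
          by (simp add: W'_def)
        then show ?thesis by (intro bexI[of _ "vadd x y"]) (auto simp: P_def)
      qed
    qed
    have img: "(\<lambda>(a, b). vadd a b) ` (P \<times> W') = W"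
    proof
      show "(\<lambda>(a, b). vadd a b) ` (P \<times> W') \<subseteq> W"
      proof
        fix v assume "v \<in> (\<lambda>(a, b). vadd a b) ` (P \<times> W')"
        then obtain a b where "a \<in> P" "b \<in> W'" "v = vadd a b" by auto
        then show "v \<in> W" using PW W'W sub_add[OF sW] by auto
      qed
      show "W \<subseteq> (\<lambda>(a, b). vadd a b) ` (P \<times> W')"
      proof
        fix w assume w: "w \<in> W"
        obtain p where p: "p \<in> P" "vadd p w \<in> W'" using dec[OF w] by blast
        have "w = (\<lambda>(a, b). vadd a b) (p, vadd p w)" by simp
        moreover have "(p, vadd p w) \<in> P \<times> W'" using p by simp
        ultimately show "w \<in> (\<lambda>(a, b). vadd a b) ` (P \<times> W')" by (rule image_eqI)
      qed
    qed
    have cW: "card W = 4 * card W'" using dsum_card[OF sP sW' PW'] img cP by simp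
    have "card W' \<ge> 1" using sub_zero[OF sW'] sub_finite[OF sW'] by (metis One_nat_def Suc_leI card_gt_0_iff empty_iff)
    then have lt: "card W' < card W" using cW by simp
    have nd: "\<forall>w\<in>W'. w \<noteq> vzero \<longrightarrow> (\<exists>v\<in>W'. \<beta> w v = 1)"
    proof (intro ballI impI)
      fix w assume w: "w \<in> W'" "w \<noteq> vzero"
      have wW: "w \<in> W" using w W'W by blast
      have wV: "w \<in> Vec n" using wW WV by blast
      obtain v where v: "v \<in> W" "\<beta> w v = 1" using less.prems(2) wW w(2) by blast
      obtain p where p: "p \<in> P" "vadd p v \<in> W'" using dec[OF v(1)] by blast
      have pW: "p \<in> W" using p PW by blast
      have wx: "\<beta> w x = 0" "\<beta> w y = 0" using w symm[OF alt wV xV] symm[OF alt wV yV]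
        by (auto simp: W'_def)
      have wp: "\<beta> w p = 0"
        using p(1) wx \<beta>_zero2[OF wV] \<beta>_add2[OF wV xV yV] by (auto simp: P_def)
      have "\<beta> w (vadd p v) = \<beta> w p + \<beta> w v" using \<beta>_add2 wV pW v(1) WV by blast
      then have "\<beta> w (vadd p v) = 1" using wp v(2) by simp
      then show "\<exists>v\<in>W'. \<beta> w v = 1" using p(2) by blast
    qed
    obtain m where "card W' = 4 ^ m" using less.hyps[OF lt sW' nd] by blast
    then show ?thesis using cW by (intro exI[of _ "Suc m"]) simp
  qed
qed

lemma caseA:
  assumes alt: "\<forall>x\<in>Vec n. \<beta> x x = 0"
  shows "symplectic_polarity n \<theta> \<and> odd n"
proof
  have nd: "\<forall>x\<in>Vec n. (\<forall>y\<in>Vec n. \<beta> x y = 0) \<longrightarrow> x = vzero"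
    using Hp_proper by fastforce
  have af: "alt_form n \<beta>" unfolding alt_form_def using \<beta>_add1 \<beta>_add2 alt nd by simp
  show "symplectic_polarity n \<theta>" unfolding symplectic_polarity_def using af th_perp by blast
  have nd2: "\<forall>x\<in>Vec n. x \<noteq> vzero \<longrightarrow> (\<exists>y\<in>Vec n. \<beta> x y = 1)" using Hp_proper by blast
  obtain m where "card (Vec n) = 4 ^ m" using symp_count[OF alt sub_Vec_full nd2] by blast
  then have eq: "(2::nat) ^ Suc n = 2 ^ (2 * m)" by (simp add: power_mult)
  have "1 < (2::nat)" by simp
  then have "Suc n = 2 * m" using eq power_inject_exp by blast
  then show "odd n" by presburger
qed

end


context dual begin

definition RN :: "(nat \<Rightarrow> bit) set \<Rightarrow> bool" where
  "RN U \<longleftrightarrow> (\<forall>y\<in>U. (\<forall>u\<in>U. \<beta> u y = 0) \<longrightarrow> y = vzero)"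

definition Hx :: "(nat \<Rightarrow> bit) set \<Rightarrow> (nat \<Rightarrow> bit) \<Rightarrow> (nat \<Rightarrow> bit) set" where
  "Hx U x = {y \<in> U. \<beta> x y = 0}"

lemma hyp_RN:
  assumes sU: "subspace2 n U" and x: "x \<in> U" and xx: "\<beta> x x = 1"
  shows "subspace2 n (Hx U x)" "card U = 2 * card (Hx U x)" "RN U \<Longrightarrow> RN (Hx U x)"
proof -
  have UV: "U \<subseteq> Vec n" using sub_Vec[OF sU] .
  have xV: "x \<in> Vec n" using x UV by blast
  have add: "\<forall>a\<in>U. \<forall>b\<in>U. \<beta> x (vadd a b) = \<beta> x a + \<beta> x b" using \<beta>_add2 xV UV by blast
  note hv = halving[OF sU add x xx]
  show "subspace2 n (Hx U x)" using hv(1) by (simp add: Hx_def)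
  show "card U = 2 * card (Hx U x)" using hv(2) by (simp add: Hx_def)
  assume rn: "RN U"
  show "RN (Hx U x)" unfolding RN_def
  proof (intro ballI impI)
    fix y assume y: "y \<in> Hx U x" and h: "\<forall>u\<in>Hx U x. \<beta> u y = 0"
    have yU: "y \<in> U" and yx: "\<beta> x y = 0" using y by (auto simp: Hx_def)
    have yV: "y \<in> Vec n" using yU UV by blast
    have "\<beta> u y = 0" if u: "u \<in> U" for u
    proof (cases "\<beta> x u = 0")
      case True then show ?thesis using h u by (simp add: Hx_def)
    next
      case False
      then have xu: "\<beta> x u = 1" by simp
      have uV: "u \<in> Vec n" using u UV by blast
      have u'U: "vadd u x \<in> U" using sub_add[OF sU u x] .
      have "\<beta> x (vadd u x) = 0" using \<beta>_add2[OF xV uV xV] xu xx by simp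
      then have "vadd u x \<in> Hx U x" using u'U by (simp add: Hx_def)
      then have "\<beta> (vadd u x) y = 0" using h by blast
      moreover have "\<beta> (vadd (vadd u x) x) y = \<beta> (vadd u x) y + \<beta> x y"
        using \<beta>_add1 u'U xV yV UV by blast
      ultimately show ?thesis using yx by simp
    qed
    then show "y = vzero" using rn yU by (simp add: RN_def)
  qed
qed

lemma card4:
  assumes "finite K" "card K \<ge> 4" "vzero \<in> K"
  shows "\<exists>k1\<in>K. \<exists>k2\<in>K. k1 \<noteq> vzero \<and> k2 \<noteq> vzero \<and> k1 \<noteq> k2"
proof -
  have "card (K - {vzero}) \<ge> 3" using assms by (simp add: card_Diff_singleton)
  then obtain k1 where k1: "k1 \<in> K - {vzero}"
    by (metis all_not_in_conv card.empty not_numeral_le_zero)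
  have "card (K - {vzero} - {k1}) \<ge> 2" using k1 assms \<open>card (K - {vzero}) \<ge> 3\<close>
    by (simp add: card_Diff_singleton)
  then obtain k2 where k2: "k2 \<in> K - {vzero} - {k1}"
    by (metis all_not_in_conv card.empty not_numeral_le_zero)
  show ?thesis using k1 k2 by blast
qed

lemma descent:
  assumes sU: "subspace2 n U" and rn: "RN U" and c16: "16 \<le> card U"
    and x: "x \<in> U" and xx: "\<beta> x x = 1"
  shows "\<exists>x'\<in>U. \<beta> x' x' = 1 \<and> (\<exists>z\<in>Hx U x'. \<beta> z z = 1)"
proof (cases "\<exists>z\<in>Hx U x. \<beta> z z = 1")
  case True then show ?thesis using x xx by blast
next
  case False
  then have Q0: "\<And>z. z \<in> Hx U x \<Longrightarrow> \<beta> z z = 0" by auto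
  have UV: "U \<subseteq> Vec n" using sub_Vec[OF sU] .
  have xV: "x \<in> Vec n" using x UV by blast
  let ?H = "Hx U x"
  note hr = hyp_RN[OF sU x xx]
  have sH: "subspace2 n ?H" and cH: "card U = 2 * card ?H" and rH: "RN ?H" using hr rn by auto
  have HU: "?H \<subseteq> U" by (auto simp: Hx_def)
  have HV: "?H \<subseteq> Vec n" using HU UV by blast
  let ?K = "{h \<in> ?H. \<beta> h x = 0}"
  have KH: "?K \<subseteq> ?H" by blast
  have claim: "\<exists>y\<in>?K. \<exists>h\<in>?K. \<beta> y h = 1"
  proof (rule ccontr)
    assume nt: "\<not> ?thesis"
    have K0: "\<beta> y h = 0" if "y \<in> ?K" "h \<in> ?K" for y h
    proof -
      have "\<beta> y h \<noteq> 1" using nt that by blast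
      then show ?thesis by simp
    qed
    show False
    proof (cases "\<forall>h\<in>?H. \<beta> h x = 0")
      case True
      then have KeqH: "?K = ?H" by blast
      have "card ?H \<ge> 8" using cH c16 by simp
      then have "card ?H \<ge> 4" by simp
      then obtain h where h: "h \<in> ?H" "h \<noteq> vzero"
        using card4[OF sub_finite[OF sH] _ sub_zero[OF sH]] by blast
      have "\<forall>u\<in>?H. \<beta> u h = 0" using K0 KeqH h(1) by blast
      then show False using rH h unfolding RN_def by blast
    next
      case False
      then obtain h0 where h0: "h0 \<in> ?H" "\<beta> h0 x = 1" by auto
      have addx: "\<forall>a\<in>?H. \<forall>b\<in>?H. \<beta> (vadd a b) x = \<beta> a x + \<beta> b x"
        using \<beta>_add1 xV HV by blast
      note hk = halving[OF sH addx h0]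
      have "card ?K \<ge> 4" using hk(2) cH c16 by simp
      then obtain k1 k2 where k: "k1 \<in> ?K" "k2 \<in> ?K" "k1 \<noteq> vzero" "k2 \<noteq> vzero" "k1 \<noteq> k2"
        using card4[OF sub_finite[OF hk(1)] _ sub_zero[OF hk(1)]] by blast
      have one: "\<beta> h0 k = 1" if kK: "k \<in> ?K" and k0: "k \<noteq> vzero" for k
      proof -
        have "\<not> (\<forall>u\<in>?H. \<beta> u k = 0)" using rH kK k0 unfolding RN_def by blast
        then obtain h' where h': "h' \<in> ?H" "\<beta> h' k = 1" by auto
        have "h' \<notin> ?K" using K0 kK h'(2) by fastforce
        then have h'x: "\<beta> h' x = 1" using h'(1) by simp
        have h''H: "vadd h' h0 \<in> ?H" using sub_add[OF sH h'(1) h0(1)] .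
        have "\<beta> (vadd h' h0) x = 0" using addx h'(1) h0 h'x by simp
        then have h''K: "vadd h' h0 \<in> ?K" using h''H by blast
        then have "\<beta> (vadd h' h0) k = 0" using K0 kK by blast
        moreover have "h0 = vadd h' (vadd h' h0)" by simp
        moreover have "\<beta> (vadd h' (vadd h' h0)) k = \<beta> h' k + \<beta> (vadd h' h0) k"
          using \<beta>_add1 h'(1) h''H kK HV by blast
        ultimately show ?thesis using h'(2) by simp
      qed
      have k3K: "vadd k1 k2 \<in> ?K" using sub_add[OF hk(1) k(1) k(2)] .
      have k30: "vadd k1 k2 \<noteq> vzero" using k(5) vadd_eq_zero_iff by simp
      have "\<beta> h0 (vadd k1 k2) = \<beta> h0 k1 + \<beta> h0 k2" using \<beta>_add2 h0(1) k(1) k(2) HV by blast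
      then have "\<beta> h0 (vadd k1 k2) = 0" using one[OF k(1) k(3)] one[OF k(2) k(4)] by simp
      then show False using one[OF k3K k30] by simp
    qed
  qed
  then obtain y h where y: "y \<in> ?K" and h: "h \<in> ?K" and yh: "\<beta> y h = 1" by blast
  have yU: "y \<in> U" and hU: "h \<in> U" using y h by (auto simp: Hx_def)
  have yV: "y \<in> Vec n" and hV: "h \<in> Vec n" using yU hU UV by auto
  have xy: "\<beta> x y = 0" "\<beta> y x = 0" "\<beta> y y = 0" using y Q0 by (auto simp: Hx_def)
  have xh: "\<beta> x h = 0" "\<beta> h x = 0" "\<beta> h h = 0" using h Q0 by (auto simp: Hx_def)
  define x' where "x' = vadd x y"
  define z where "z = vadd x h"
  have x'U: "x' \<in> U" using sub_add[OF sU x yU] by (simp add: x'_def)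
  have zU: "z \<in> U" using sub_add[OF sU x hU] by (simp add: z_def)
  have "\<beta> x' x' = 1" using Qadd[OF xV yV] xx xy by (simp add: x'_def)
  moreover have "\<beta> z z = 1" using Qadd[OF xV hV] xx xh by (simp add: z_def)
  moreover have "\<beta> x' z = 0"
  proof -
    have "\<beta> x' z = \<beta> x z + \<beta> y z" using \<beta>_add1[OF xV yV] zU UV by (simp add: x'_def subset_iff)
    also have "\<dots> = (\<beta> x x + \<beta> x h) + (\<beta> y x + \<beta> y h)" using \<beta>_add2 xV yV hV by (simp add: z_def)
    also have "\<dots> = 0" using xx xh xy yh by simp
    finally show ?thesis .
  qed
  ultimately show ?thesis using x'U zU by (auto simp: Hx_def)
qed

lemma chain:
  "\<forall>U k. subspace2 n U \<longrightarrow> card U = 2 ^ j \<longrightarrow> RN U \<longrightarrow> (\<exists>x\<in>U. \<beta> x x = 1) \<longrightarrow> 1 \<le> k \<longrightarrow> k \<le> j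
     \<longrightarrow> (\<exists>U'. subspace2 n U' \<and> card U' = 2 ^ k \<and> RN U')"
proof (induction j)
  case 0
  then show ?case by simp
next
  case (Suc j)
  show ?case
  proof (intro allI impI)
    fix U k
    assume sU: "subspace2 n U" and cU: "card U = 2 ^ Suc j" and rn: "RN U"
      and ex: "\<exists>x\<in>U. \<beta> x x = 1" and k1: "1 \<le> k" and kj: "k \<le> Suc j"
    obtain x where x: "x \<in> U" "\<beta> x x = 1" using ex by blast
    have xV: "x \<in> Vec n" using x sub_Vec[OF sU] by blast
    show "\<exists>U'. subspace2 n U' \<and> card U' = 2 ^ k \<and> RN U'"
    proof (cases "k = Suc j")
      case True then show ?thesis using sU cU rn by blast
    next
      case False
      then have kj': "k \<le> j" using kj by simp
      show ?thesis
      proof (cases "k = 1")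
        case True
        have x0: "x \<noteq> vzero" using x(2) by auto
        have "subspace2 n (pt x)" using pt_sub[OF xV] .
        moreover have "card (pt x) = 2 ^ k" using pt_card[OF x0] True by simp
        moreover have "RN (pt x)" unfolding RN_def pt_def using x(2) by auto
        ultimately show ?thesis by blast
      next
        case False
        then have k2: "2 \<le> k" using k1 by simp
        show ?thesis
        proof (cases "k = j")
          case True
          note hr = hyp_RN[OF sU x]
          have "card (Hx U x) = 2 ^ j" using hr(2) cU by simp
          then show ?thesis using hr(1) hr(3)[OF rn] True by blast
        next
          case False
          then have kj2: "k < j" using kj' by simp
          then have "3 \<le> j" using k2 by simp
          then have "(2::nat) ^ 4 \<le> 2 ^ Suc j" by (intro power_increasing) auto
          then have c16: "16 \<le> card U" using cU by simp
          obtain x' z where x': "x' \<in> U" "\<beta> x' x' = 1" and z: "z \<in> Hx U x'" "\<beta> z z = 1"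
            using descent[OF sU rn c16 x] by blast
          note hr = hyp_RN[OF sU x']
          have "card (Hx U x') = 2 ^ j" using hr(2) cU by simp
          then show ?thesis using Suc.IH hr(1) hr(3)[OF rn] z k1 kj' by blast
        qed
      qed
    qed
  qed
qed

end


lemma simplex_same_dim:
  assumes "simplex n C" "V \<in> C" "V' \<in> C" "vdim V = vdim V'"
  shows "V = V'"
proof -
  have VV: "V \<in> Verts n" "V' \<in> Verts n" using assms by (auto simp: simplex_def)
  have c: "card V = card V'" using Verts_card[OF VV(1)] Verts_card[OF VV(2)] assms(4) by simp
  have "incident V V'" using assms by (simp add: simplex_def)
  then consider "V \<subseteq> V'" | "V' \<subseteq> V" unfolding incident_def by blast
  then show ?thesis
  proof cases
    case 1 show ?thesis by (rule card_eq_sub[OF sub_finite[OF Verts_sub[OF VV(2)]] 1 c])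
  next
    case 2 show ?thesis using card_eq_sub[OF sub_finite[OF Verts_sub[OF VV(1)]] 2 c[symmetric]] by simp
  qed
qed

lemma chamber_fun:
  assumes C: "chamber n C"
  shows "\<exists>c. (\<forall>j\<in>{1..n}. c j \<in> C \<and> vdim (c j) = j) \<and> C = c ` {1..n}
    \<and> (\<forall>j. 1 \<le> j \<longrightarrow> j < n \<longrightarrow> c j \<subseteq> c (Suc j))"
proof -
  have sC: "simplex n C" and tC: "vdim ` C = {1..n}" using C by (auto simp: chamber_def stype_def)
  define c where "c j = (SOME V. V \<in> C \<and> vdim V = j)" for j
  have cj: "c j \<in> C \<and> vdim (c j) = j" if "j \<in> {1..n}" for j
  proof -
    have "\<exists>V. V \<in> C \<and> vdim V = j" using that tC by (metis imageE)
    then show ?thesis unfolding c_def by (rule someI_ex)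
  qed
  have eq: "C = c ` {1..n}"
  proof
    show "C \<subseteq> c ` {1..n}"
    proof
      fix V assume V: "V \<in> C"
      then have d: "vdim V \<in> {1..n}" using tC by blast
      then have "c (vdim V) = V" using cj[OF d] simplex_same_dim[OF sC _ V] by blast
      then show "V \<in> c ` {1..n}" using d by (metis imageI)
    qed
    show "c ` {1..n} \<subseteq> C" using cj by blast
  qed
  have mono: "c j \<subseteq> c (Suc j)" if "1 \<le> j" "j < n" for j
  proof -
    have a: "c j \<in> C" "vdim (c j) = j" and b: "c (Suc j) \<in> C" "vdim (c (Suc j)) = Suc j"
      using cj that by auto
    have VV: "c j \<in> Verts n" "c (Suc j) \<in> Verts n" using a b sC by (auto simp: simplex_def)
    have "incident (c j) (c (Suc j))" using a b sC by (simp add: simplex_def)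
    then consider "c j \<subseteq> c (Suc j)" | "c (Suc j) \<subseteq> c j" unfolding incident_def by blast
    then show ?thesis
    proof cases
      case 2
      then have "card (c (Suc j)) \<le> card (c j)"
        using card_mono[OF sub_finite[OF Verts_sub[OF VV(1)]]] by blast
      then have False using Verts_card[OF VV(1)] Verts_card[OF VV(2)] a b by simp
      then show ?thesis ..
    qed simp
  qed
  show ?thesis using cj eq mono by blast
qed

lemma opp_chamber_sym: "opp_chamber n C D \<Longrightarrow> opp_chamber n D C"
  unfolding opp_chamber_def by (metis Int_commute add.commute)

lemma opp_exists:
  assumes n1: "1 \<le> n" and C: "chamber n C" and U: "U \<in> C" and T: "subspace2 n T"
    and cT: "card T = 2 ^ (Suc n - vdim U)" and UT: "U \<inter> T = {vzero}"
  shows "\<exists>D. chamber n D \<and> T \<in> D \<and> opp_chamber n C D"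
proof -
  obtain c where c1: "\<forall>j\<in>{1..n}. c j \<in> C \<and> vdim (c j) = j" and c2: "C = c ` {1..n}"
    and c3: "\<forall>j. 1 \<le> j \<longrightarrow> j < n \<longrightarrow> c j \<subseteq> c (Suc j)"
    using chamber_fun[OF C] by blast
  have sC: "simplex n C" using C by (simp add: chamber_def)
  have cV: "c j \<in> Verts n" if "j \<in> {1..n}" for j using c1 that sC by (auto simp: simplex_def)
  define N where "N = Suc n"
  define k where "k = vdim U"
  have UV: "U \<in> Verts n" using U sC by (auto simp: simplex_def)
  have k1: "1 \<le> k" "k \<le> n" using UV by (auto simp: Verts_def k_def)
  have Uck: "U = c k" using c1 k1 simplex_same_dim[OF sC U] by (auto simp: k_def)
  define cc where "cc j = (if j = 0 then {vzero} else if j \<le> n then c j else Vec n)" for j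
  have ccs: "subspace2 n (cc j) \<and> card (cc j) = 2 ^ j" if jN0: "j \<le> N" for j
  proof -
    consider "j = 0" | "1 \<le> j" "j \<le> n" | "j = N" using jN0 N_def by linarith
    then show ?thesis
    proof cases
      case 1 then show ?thesis by (simp add: cc_def sub_zero_only)
    next
      case 2 then show ?thesis using cV[of j] c1 Verts_card[of "c j" n] Verts_sub[of "c j" n]
        by (simp add: cc_def)
    next
      case 3 then show ?thesis by (simp add: cc_def N_def sub_Vec_full)
    qed
  qed
  have ccm1: "cc j \<subseteq> cc (Suc j)" if jN0: "j < N" for j
  proof -
    consider "j = 0" | "1 \<le> j" "j < n" | "j = n" using jN0 N_def by linarith
    then show ?thesis
    proof cases
      case 1
      have "vzero \<in> c 1" using cV[of 1] n1 Verts_sub sub_zero by auto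
      then show ?thesis using 1 n1 by (simp add: cc_def)
    next
      case 2 then show ?thesis using c3 by (simp add: cc_def)
    next
      case 3 then show ?thesis using cV[of n] n1 Verts_sub sub_Vec by (auto simp: cc_def)
    qed
  qed
  have ccm: "cc i \<subseteq> cc j" if "i \<le> j" "j \<le> N" for i j
    using that
  proof (induction j)
    case 0 then show ?case by simp
  next
    case (Suc j)
    show ?case
    proof (cases "i = Suc j")
      case False
      then have "cc i \<subseteq> cc j" using Suc by simp
      then show ?thesis using ccm1[of j] Suc.prems by auto
    qed simp
  qed
  have Ucc: "cc k = U" using Uck k1 by (simp add: cc_def)
  have sU: "subspace2 n U" using Verts_sub[OF UV] .
  have cU: "card U = 2 ^ k" using Verts_card[OF UV] by (simp add: k_def)
  have cT': "card T = 2 ^ (N - k)" using cT by (simp add: N_def k_def)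
  have sumUT: "\<exists>u\<in>U. \<exists>t\<in>T. v = vadd u t" if v: "v \<in> Vec n" for v
  proof -
    have "card U * card T = card (Vec n)" using cU cT' k1
      by (simp add: N_def power_add[symmetric])
    then show ?thesis using dsum_all[OF sU T UT _ sub_Vec_full sub_Vec[OF sU] sub_Vec[OF T] v] by blast
  qed
  define P where "P m W \<longleftrightarrow> (\<forall>i\<le>m. subspace2 n (W i) \<and> card (W i) = 2 ^ i \<and> W i \<inter> cc (N - i) = {vzero}
      \<and> (i \<le> N - k \<longrightarrow> W i \<subseteq> T) \<and> (i < m \<longrightarrow> W i \<subseteq> W (Suc i)))" for m W
  have build: "m \<le> N \<Longrightarrow> \<exists>W. P m W" for m
  proof (induction m)
    case 0
    have "{vzero} \<inter> cc N = {vzero}" using ccs[of N] sub_zero by auto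
    moreover have "{vzero} \<subseteq> T" using sub_zero[OF T] by simp
    ultimately have "P 0 (\<lambda>_. {vzero})" unfolding P_def using sub_zero_only by simp
    then show ?case by blast
  next
    case (Suc m)
    then obtain W where W: "P m W" by auto
    have mN: "m < N" using Suc.prems by simp
    define j where "j = N - Suc m"
    have jN: "Suc j = N - m" "Suc j \<le> N" using mN by (auto simp: j_def)
    have Wm: "subspace2 n (W m)" "card (W m) = 2 ^ m" "W m \<inter> cc (Suc j) = {vzero}"
      "m \<le> N - k \<longrightarrow> W m \<subseteq> T"
      using W jN unfolding P_def by auto
    have sj: "subspace2 n (cc j)" "card (cc j) = 2 ^ j" and sj1: "subspace2 n (cc (Suc j))" "card (cc (Suc j)) = 2 ^ Suc j"
      using ccs jN by auto
    have "j < N" using jN by simp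
    then have jsub: "cc j \<subseteq> cc (Suc j)" by (rule ccm1)
    obtain w where w: "w \<in> cc (Suc j)" "w \<notin> cc j" and wT: "Suc m \<le> N - k \<longrightarrow> w \<in> T"
    proof (cases "Suc m \<le> N - k")
      case True
      then have kj: "k \<le> j" using j_def by simp
      have "\<exists>w\<in>T \<inter> cc (Suc j). w \<notin> cc j"
      proof (rule ccontr)
        assume "\<not> ?thesis"
        then have TS: "T \<inter> cc (Suc j) \<subseteq> cc j" by blast
        have "cc (Suc j) \<subseteq> cc j"
        proof
          fix v assume v: "v \<in> cc (Suc j)"
          then have vV: "v \<in> Vec n" using sub_Vec[OF sj1(1)] by blast
          obtain u t where ut: "u \<in> U" "t \<in> T" "v = vadd u t" using sumUT[OF vV] by blast
          have uj: "u \<in> cc j" using ut(1) Ucc ccm[of k j] kj jN by auto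
          have "t = vadd u v" using ut(3) by simp
          then have "t \<in> cc (Suc j)" using sub_add[OF sj1(1)] uj jsub v by auto
          then have "t \<in> cc j" using TS ut(2) by blast
          then show "v \<in> cc j" using ut(3) uj sub_add[OF sj(1)] by auto
        qed
        then have "card (cc (Suc j)) \<le> card (cc j)" using card_mono[OF sub_finite[OF sj(1)]] by blast
        then show False using sj(2) sj1(2) by simp
      qed
      then show ?thesis using that by blast
    next
      case False
      have "cc (Suc j) \<noteq> cc j" using sj(2) sj1(2) by auto
      then obtain w where "w \<in> cc (Suc j)" "w \<notin> cc j" using jsub by blast
      then show ?thesis using that False by blast
    qed
    have wV: "w \<in> Vec n" using w(1) sub_Vec[OF sj1(1)] by blast
    have w0: "w \<noteq> vzero" using w(2) sub_zero[OF sj(1)] by auto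
    have wW: "w \<notin> W m" using Wm(3) w(1) w0 by blast
    define W' where "W' = W(Suc m := ext (W m) w)"
    have new: "subspace2 n (W' (Suc m))" "card (W' (Suc m)) = 2 ^ Suc m"
      "W' (Suc m) \<inter> cc (N - Suc m) = {vzero}" "Suc m \<le> N - k \<longrightarrow> W' (Suc m) \<subseteq> T"
      "W' m \<subseteq> W' (Suc m)"
    proof -
      show "subspace2 n (W' (Suc m))" using ext_sub[OF Wm(1) wV] by (simp add: W'_def)
      show "card (W' (Suc m)) = 2 ^ Suc m" using ext_card[OF Wm(1) wW] Wm(2) by (simp add: W'_def)
      show "W' m \<subseteq> W' (Suc m)" using ext_subset by (simp add: W'_def)
      show "Suc m \<le> N - k \<longrightarrow> W' (Suc m) \<subseteq> T"
        using ext_le[OF T] Wm(4) wT by (simp add: W'_def)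
      have "z = vzero" if z: "z \<in> ext (W m) w" "z \<in> cc j" for z
      proof -
        have "z \<in> W m \<or> (\<exists>a\<in>W m. z = vadd w a)" using z(1) ext_iff by blast
        then show ?thesis
        proof
          assume "z \<in> W m" then show ?thesis using z(2) jsub Wm(3) by blast
        next
          assume "\<exists>a\<in>W m. z = vadd w a"
          then obtain a where a: "a \<in> W m" "z = vadd w a" by blast
          have "a = vadd w z" using a(2) by simp
          then have "a \<in> cc (Suc j)" using sub_add[OF sj1(1) w(1)] z(2) jsub by blast
          then have "a = vzero" using a(1) Wm(3) by blast
          then have "z = w" using a(2) by simp
          then show ?thesis using z(2) w(2) by simp
        qed
      qed
      moreover have "vzero \<in> ext (W m) w" "vzero \<in> cc j"
        using ext_subset sub_zero[OF Wm(1)] sub_zero[OF sj(1)] by auto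
      ultimately show "W' (Suc m) \<inter> cc (N - Suc m) = {vzero}" by (auto simp: W'_def j_def)
    qed
    have "P (Suc m) W'"
      unfolding P_def
    proof (intro allI impI)
      fix i assume i: "i \<le> Suc m"
      show "subspace2 n (W' i) \<and> card (W' i) = 2 ^ i \<and> W' i \<inter> cc (N - i) = {vzero}
        \<and> (i \<le> N - k \<longrightarrow> W' i \<subseteq> T) \<and> (i < Suc m \<longrightarrow> W' i \<subseteq> W' (Suc i))"
      proof (cases "i = Suc m")
        case True then show ?thesis using new by simp
      next
        case False
        then have im: "i \<le> m" using i by simp
        have "W' i = W i" using False by (simp add: W'_def)
        moreover have "i < Suc m \<longrightarrow> W' i \<subseteq> W' (Suc i)"
        proof (cases "i = m")
          case True then show ?thesis using new(5) by simp
        next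
          case False
          then have "W' (Suc i) = W (Suc i)" "i < m" using im by (auto simp: W'_def)
          then show ?thesis using W im \<open>W' i = W i\<close> unfolding P_def by auto
        qed
        ultimately show ?thesis using W im unfolding P_def by auto
      qed
    qed
    then show ?case by blast
  qed
  obtain W where W: "P N W" using build by blast
  have Wp: "subspace2 n (W i)" "card (W i) = 2 ^ i" "W i \<inter> cc (N - i) = {vzero}"
    "i \<le> N - k \<Longrightarrow> W i \<subseteq> T" if "i \<le> N" for i
    using W that unfolding P_def by auto
  have Wm1: "W i \<subseteq> W (Suc i)" if "i < N" for i using W that unfolding P_def by auto
  have Wmono: "W i \<subseteq> W j" if "i \<le> j" "j \<le> N" for i j
    using that
  proof (induction j)
    case 0 then show ?case by simp
  next
    case (Suc j)
    show ?case
    proof (cases "i = Suc j")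
      case False
      then have "W i \<subseteq> W j" using Suc by simp
      then show ?thesis using Wm1[of j] Suc.prems by auto
    qed simp
  qed
  have WV: "W i \<in> Verts n \<and> vdim (W i) = i" if "i \<in> {1..n}" for i
    using Verts_of_card[OF Wp(1) Wp(2)] that by (auto simp: N_def)
  define D where "D = W ` {1..n}"
  have sD: "simplex n D"
    unfolding simplex_def D_def
  proof (intro conjI ballI)
    show "W ` {1..n} \<subseteq> Verts n" using WV by blast
    fix A B assume "A \<in> W ` {1..n}" "B \<in> W ` {1..n}"
    then obtain i j where ij: "i \<in> {1..n}" "j \<in> {1..n}" "A = W i" "B = W j" by blast
    show "incident A B"
    proof (cases "i \<le> j")
      case True then show ?thesis using Wmono[of i j] ij by (auto simp: incident_def N_def)
    next
      case False then show ?thesis using Wmono[of j i] ij by (auto simp: incident_def N_def)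
    qed
  qed
  have tD: "stype D = {1..n}"
  proof -
    have "stype D = (\<lambda>i. vdim (W i)) ` {1..n}" by (simp add: stype_def D_def image_image)
    also have "\<dots> = (\<lambda>i. i) ` {1..n}" using WV by (intro image_cong) auto
    finally show ?thesis by simp
  qed
  have chD: "chamber n D" using sD tD by (simp add: chamber_def)
  have Nk: "N - k \<in> {1..n}" using k1 by (auto simp: N_def)
  have "W (N - k) = T"
  proof -
    have "W (N - k) \<subseteq> T" using Wp(4)[of "N - k"] by simp
    moreover have "card (W (N - k)) = card T" using Wp(2)[of "N - k"] cT' by simp
    ultimately show ?thesis using card_eq_sub[OF sub_finite[OF T]] by blast
  qed
  then have TD: "T \<in> D" using Nk unfolding D_def by (metis imageI)
  have "opp_chamber n C D"
    unfolding opp_chamber_def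
  proof (intro conjI C chD ballI impI)
    fix A B assume A: "A \<in> C" and B: "B \<in> D" and d: "vdim A + vdim B = n + 1"
    obtain j where j: "j \<in> {1..n}" "A = c j" using A c2 by blast
    obtain i where i: "i \<in> {1..n}" "B = W i" using B D_def by blast
    have "vdim A = j" using c1 j by simp
    moreover have "vdim B = i" using WV i by simp
    ultimately have "j = N - i" using d by (simp add: N_def)
    then have "cc (N - i) = cc j" by simp
    also have "cc j = A" using j by (simp add: cc_def)
    finally have "cc (N - i) = A" .
    then show "A \<inter> B = {vzero}" using Wp(3)[of i] i by (auto simp: N_def Int_commute)
  qed
  then show ?thesis using chD TD by blast
qed



context dual begin

lemma caseB:
  assumes ex: "\<exists>x\<in>Vec n. \<beta> x x = 1" and dom: "domestic n \<theta>"
  shows "exceptional_domestic n \<theta>"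
  unfolding exceptional_domestic_def
proof (intro conjI dom ballI)
  fix i assume i: "i \<in> {1..n}"
  have rnV: "RN (Vec n)" unfolding RN_def
  proof (intro ballI impI)
    fix y assume y: "y \<in> Vec n" and h: "\<forall>u\<in>Vec n. \<beta> u y = 0"
    show "y = vzero"
    proof (rule ccontr)
      assume "y \<noteq> vzero"
      then obtain x where "x \<in> Vec n" "\<beta> x y = 1" using RN_V y by blast
      then show False using h by auto
    qed
  qed
  have i1: "1 \<le> i" "i \<le> Suc n" using i by auto
  have "\<exists>U'. subspace2 n U' \<and> card U' = 2 ^ i \<and> RN U'"
    by (rule chain[of "Suc n", rule_format, OF sub_Vec_full Vec_card' rnV ex i1])
  then obtain U where U: "subspace2 n U" "card U = 2 ^ i" "RN U" by blast
  have UV: "U \<in> Verts n" "vdim U = i" using Verts_of_card[OF U(1) U(2)] i by auto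
  have tU: "\<theta> U = perp n \<beta> U" using th_perp[OF UV(1)] .
  have UT: "U \<inter> \<theta> U = {vzero}"
  proof
    show "U \<inter> \<theta> U \<subseteq> {vzero}"
    proof
      fix y assume "y \<in> U \<inter> \<theta> U"
      then have "y \<in> U" "\<forall>u\<in>U. \<beta> u y = 0" using tU by (auto simp: perp_def)
      then show "y \<in> {vzero}" using U(3) by (simp add: RN_def)
    qed
    show "{vzero} \<subseteq> U \<inter> \<theta> U"
      using sub_zero[OF U(1)] sub_zero[OF Verts_sub[OF th_Verts[OF UV(1)]]] by simp
  qed
  have tUV: "\<theta> U \<in> Verts n" using th_Verts[OF UV(1)] .
  have n1: "1 \<le> n" using n2 by simp
  have ctU: "card (\<theta> U) = 2 ^ (Suc n - vdim U)" using th_card[OF UV(1)] .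
  have dtU: "vdim (\<theta> U) = Suc n - i" using th_dim[OF UV(1)] UV(2) by simp
  have cU': "card U = 2 ^ (Suc n - vdim (\<theta> U))" using U(2) dtU i by simp
  have simpU: "simplex n {U}" using UV(1) by (simp add: simplex_def incident_def)
  have simpT: "simplex n {\<theta> U}" using tUV by (simp add: simplex_def incident_def)
  have "opp_simplex n {U} {\<theta> U}"
    unfolding opp_simplex_def
  proof (intro conjI simpU simpT allI impI)
    fix C assume C: "chamber n C \<and> {U} \<subseteq> C"
    then obtain D where "chamber n D" "\<theta> U \<in> D" "opp_chamber n C D"
      using opp_exists[OF n1 _ _ Verts_sub[OF tUV] ctU UT] by blast
    then show "\<exists>D. chamber n D \<and> {\<theta> U} \<subseteq> D \<and> opp_chamber n C D" by blast
  next
    fix D assume D: "chamber n D \<and> {\<theta> U} \<subseteq> D"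
    have TU: "\<theta> U \<inter> U = {vzero}" using UT by blast
    obtain C where "chamber n C" "U \<in> C" "opp_chamber n D C"
      using opp_exists[OF n1 _ _ U(1) cU' TU] D by blast
    then show "\<exists>C. chamber n C \<and> {U} \<subseteq> C \<and> opp_chamber n C D"
      using opp_chamber_sym by blast
  qed
  then show "\<exists>S. simplex n S \<and> i \<in> stype S \<and> opp_simplex n S (\<theta> ` S)"
    using simpU UV(2) by (intro exI[of _ "{U}"]) (simp add: stype_def)
qed

end

theorem theorem3p10:
  fixes n :: nat and \<theta> :: "(nat \<Rightarrow> bit) set \<Rightarrow> (nat \<Rightarrow> bit) set"
  assumes "n \<ge> 2" and "duality n \<theta>" and "domestic n \<theta>"
  shows "exceptional_domestic n \<theta> \<or> (odd n \<and> symplectic_polarity n \<theta>)"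
proof -
  interpret dual n \<theta> using assms(1,2) by unfold_locales
  show ?thesis
  proof (cases "\<exists>x\<in>Vec n. \<beta> x x = 1")
    case True
    then show ?thesis using caseB assms(3) by blast
  next
    case False
    then have "\<forall>x\<in>Vec n. \<beta> x x = 0" by auto
    then show ?thesis using caseA by blast
  qed
qed



end
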